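(* For each $\gamma\in(0,1)$ there exist $\varepsilon_0^B>0$ and a constant $C(\gamma)$ such that for all $\varepsilon\in(0,\varepsilon_0^B)$ and all $f\in H^1(\mathbb{T}^d)$, $$\|f\|_{H^1(\mathbb{T}^d)}^2\le\gamma\int_{\mathbb{T}^d}\int_{\mathbb{T}^d}\frac{|\nabla f(x)-\nabla f(y)|^2}{\varepsilon^2}\omega_\varepsilon(|x-y|)\,dx\,dy+C(\gamma)\|f\|_{L^2(\mathbb{T}^d)}^2.$$
   Context: $\omega:\mathbb{R}^d\to[0,\infty)$ is a smooth radial function (written $\omega(|x|)$) supported in the unit ball with $\int_{\mathbb{R}^d}\omega=1$; $\omega_\varepsilon(x)=\varepsilon^{-d}\omega(x/\varepsilon)$; $|x-y|$ is the periodic distance on the torus $\mathbb{T}^d$. *)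

theory Defs
  imports "HOL-Analysis.Analysis"
begin

text \<open>The torus T^d is realised as the unit cube [0,1]^d with periodic identification;
functions on T^d are functions on real^'n that are 1-periodic in every coordinate.\<close>

definition torus_cube :: "(real^'n) set" where
  "torus_cube = {x. \<forall>i. 0 \<le> x $ i \<and> x $ i \<le> 1}"

definition lattice_vec :: "int^'n \<Rightarrow> real^'n" where
  "lattice_vec k = (\<chi> i. real_of_int (k $ i))"

definition periodic :: "(real^'n \<Rightarrow> 'b) \<Rightarrow> bool" where
  "periodic f \<longleftrightarrow> (\<forall>x k. f (x + lattice_vec k) = f x)"

definition tdist :: "real^'n \<Rightarrow> real^'n \<Rightarrow> real" where
  "tdist x y = Inf (range (\<lambda>k. norm (x - y - lattice_vec k)))"

definition has_partial :: "(real^'n \<Rightarrow> real) \<Rightarrow> 'n \<Rightarrow> (real^'n \<Rightarrow> real) \<Rightarrow> bool" where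
  "has_partial f i D \<longleftrightarrow>
     (\<forall>x. ((\<lambda>t. f (x + t *\<^sub>R axis i 1)) has_real_derivative D x) (at 0))"

fun Ck :: "nat \<Rightarrow> (real^'n \<Rightarrow> real) \<Rightarrow> bool" where
  "Ck 0 f = continuous_on UNIV f"
| "Ck (Suc k) f = (continuous_on UNIV f \<and>
       (\<forall>i. \<exists>D. has_partial f i D \<and> Ck k D))"

definition smooth :: "(real^'n \<Rightarrow> real) \<Rightarrow> bool" where
  "smooth f \<longleftrightarrow> (\<forall>k. Ck k f)"

definition H1_weak_grad :: "(real^'n \<Rightarrow> real) \<Rightarrow> (real^'n \<Rightarrow> real^'n) \<Rightarrow> bool" where
  "H1_weak_grad f g \<longleftrightarrow>
     periodic f \<and> periodic g \<and>
     f \<in> borel_measurable lborel \<and> g \<in> borel_measurable lborel \<and>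
     set_integrable lborel torus_cube (\<lambda>x. (f x)\<^sup>2) \<and>
     set_integrable lborel torus_cube (\<lambda>x. (norm (g x))\<^sup>2) \<and>
     (\<forall>\<phi> i D. smooth \<phi> \<and> periodic \<phi> \<and> has_partial \<phi> i D \<longrightarrow>
        (LINT x:torus_cube|lborel. f x * D x) = - (LINT x:torus_cube|lborel. g x $ i * \<phi> x))"

definition L2_sq :: "(real^'n \<Rightarrow> real) \<Rightarrow> real" where
  "L2_sq f = (LINT x:torus_cube|lborel. (f x)\<^sup>2)"

definition H1_sq :: "(real^'n \<Rightarrow> real) \<Rightarrow> (real^'n \<Rightarrow> real^'n) \<Rightarrow> real" where
  "H1_sq f g = L2_sq f + (LINT x:torus_cube|lborel. (norm (g x))\<^sup>2)"

definition moll :: "(real \<Rightarrow> real) \<Rightarrow> real \<Rightarrow> nat \<Rightarrow> real \<Rightarrow> real" where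
  "moll \<omega> \<epsilon> d r = \<omega> (r / \<epsilon>) / \<epsilon> ^ d"

end

theory Submission
  imports Defs
begin


lemma has_partial_unique: "has_partial f i D1 \<Longrightarrow> has_partial f i D2 \<Longrightarrow> D1 = D2"
  unfolding has_partial_def using DERIV_unique by (metis ext)

lemma Ck_cont: "Ck k f \<Longrightarrow> continuous_on UNIV f" by (cases k) auto

lemma smooth_cont: "smooth f \<Longrightarrow> continuous_on UNIV f"
  unfolding smooth_def using Ck_cont by blast

lemma smooth_partial:
  assumes "smooth f" obtains D where "has_partial f i D" "smooth D"
proof -
  from assms have "Ck (Suc 0) f" by (simp add: smooth_def)
  then obtain D where D: "has_partial f i D" by auto
  have "Ck k D" for k
  proof -
    from assms have "Ck (Suc k) f" unfolding smooth_def by blast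
    then obtain D' where "has_partial f i D'" "Ck k D'" by auto
    with D has_partial_unique show ?thesis by metis
  qed
  then show ?thesis using that D smooth_def by blast
qed

lemma has_partial_affine:
  assumes "has_partial f i D"
  shows "has_partial (\<lambda>v. c * f (s *\<^sub>R v + a)) i (\<lambda>v. (c * s) * D (s *\<^sub>R v + a))"
  unfolding has_partial_def
proof
  fix x
  let ?y = "s *\<^sub>R x + a"
  have d1: "((\<lambda>t. f (?y + t *\<^sub>R axis i 1)) has_real_derivative D ?y) (at (s*0))"
    using assms unfolding has_partial_def by simp
  have d2: "((\<lambda>t. s*t) has_real_derivative s) (at 0)"
    using DERIV_cmult_Id by blast
  have "((\<lambda>t. f (?y + (s*t) *\<^sub>R axis i 1)) has_real_derivative D ?y * s) (at 0)"
    using DERIV_chain2[OF d1 d2] by simp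
  then have "((\<lambda>t. c * f (?y + (s*t) *\<^sub>R axis i 1)) has_real_derivative c * (D ?y * s)) (at 0)"
    by (rule DERIV_cmult)
  moreover have E: "(\<lambda>t. c * f (?y + (s*t) *\<^sub>R axis i 1)) = (\<lambda>t. c * f (s *\<^sub>R (x + t *\<^sub>R axis i 1) + a))"
    by (rule ext) (simp add: algebra_simps)
  ultimately show "((\<lambda>t. c * f (s *\<^sub>R (x + t *\<^sub>R axis i 1) + a)) has_real_derivative (c * s) * D ?y) (at 0)"
    by (simp only: E mult_ac)
qed

lemma cont_affine:
  assumes "continuous_on UNIV (f::real^'n \<Rightarrow> real)"
  shows "continuous_on UNIV (\<lambda>v. c * f (s *\<^sub>R v + a))"
proof -
  have "continuous_on UNIV (\<lambda>v::real^'n. s *\<^sub>R v + a)" by (intro continuous_intros)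
  then have "continuous_on UNIV (\<lambda>v. f (s *\<^sub>R v + a))"
    using continuous_on_compose2[OF assms] by blast
  then show ?thesis by (intro continuous_intros)
qed

lemma Ck_affine: "Ck k f \<Longrightarrow> Ck k (\<lambda>v. c * f (s *\<^sub>R v + a))"
proof (induction k arbitrary: f c)
  case 0 then show ?case using cont_affine by simp
next
  case (Suc k)
  show ?case
  proof (simp only: Ck.simps, intro conjI allI)
    show "continuous_on UNIV (\<lambda>v. c * f (s *\<^sub>R v + a))"
      by (intro cont_affine) (use Suc.prems in simp)
    fix i
    from Suc.prems obtain D where "has_partial f i D" "Ck k D" by auto
    then show "\<exists>D. has_partial (\<lambda>v. c * f (s *\<^sub>R v + a)) i D \<and> Ck k D"
      using has_partial_affine Suc.IH by blast
  qed
qed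

lemma smooth_affine: "smooth f \<Longrightarrow> smooth (\<lambda>v. c * f (s *\<^sub>R v + a))"
  unfolding smooth_def using Ck_affine by blast

lemma eventually_ball_line:
  fixes x :: "real^'n"
  assumes "open U" "x \<in> U"
  shows "eventually (\<lambda>t. x + t *\<^sub>R axis i 1 \<in> U) (nhds (0::real))"
proof -
  obtain r where r: "r > 0" "ball x r \<subseteq> U" using assms open_contains_ball by blast
  have "x + t *\<^sub>R axis i 1 \<in> U" if "dist t 0 < r" for t::real
  proof -
    have "dist x (x + t *\<^sub>R axis i 1) = \<bar>t\<bar>" by (simp add: dist_norm)
    then show ?thesis using that r by auto
  qed
  then show ?thesis unfolding eventually_nhds_metric using r(1) by blast
qed

lemma deriv_local:
  fixes x :: "real^'n"
  assumes "open U" "x \<in> U" "\<forall>y\<in>U. F y = h y"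
    "((\<lambda>t. h (x + t *\<^sub>R axis i 1)) has_real_derivative d) (at 0)"
  shows "((\<lambda>t. F (x + t *\<^sub>R axis i 1)) has_real_derivative d) (at 0)"
proof -
  have "eventually (\<lambda>t. F (x + t *\<^sub>R axis i 1) = h (x + t *\<^sub>R axis i 1)) (nhds (0::real))"
    using eventually_ball_line[OF assms(1,2), of i] by (rule eventually_mono) (use assms(3) in blast)
  from DERIV_cong_ev[OF refl this refl] assms(4) show ?thesis by simp
qed

lemma has_partial_local:
  assumes "\<And>x. \<exists>r>0. \<exists>h Dh. has_partial h i Dh \<and> (\<forall>w\<in>ball x r. F w = h w) \<and> DF x = Dh x"
  shows "has_partial F i DF"
  unfolding has_partial_def
proof
  fix x
  from assms obtain r h Dh where A: "r>0" "has_partial h i Dh" "\<forall>w\<in>ball x r. F w = h w" "DF x = Dh x"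
    by blast
  have "((\<lambda>t. h (x + t *\<^sub>R axis i 1)) has_real_derivative Dh x) (at 0)"
    using A(2) unfolding has_partial_def by blast
  from deriv_local[of "ball x r" x F h i "Dh x", OF _ _ A(3) this] A(1,4)
  show "((\<lambda>t. F (x + t *\<^sub>R axis i 1)) has_real_derivative DF x) (at 0)"
    by simp
qed

lemma cont_local:
  assumes "\<And>w0. \<exists>r>0. \<exists>h. continuous_on UNIV h \<and> (\<forall>w\<in>ball w0 r. F w = h w)"
  shows "continuous_on UNIV (F::real^'n \<Rightarrow> real)"
proof -
  have "isCont F w0" for w0
  proof -
    from assms obtain r h where r: "r>0" "continuous_on UNIV h" "\<forall>w\<in>ball w0 r. F w = h w" by blast
    have "eventually (\<lambda>w. w \<in> ball w0 r) (nhds w0)"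
      using r(1) by (intro eventually_nhds_in_open) auto
    then have ev: "eventually (\<lambda>w. F w = h w) (nhds w0)"
      by (rule eventually_mono) (use r(3) in blast)
    have "isCont h w0" using r(2) by (simp add: continuous_on_eq_continuous_at)
    then show ?thesis using isCont_cong[OF ev] by simp
  qed
  then show ?thesis by (simp add: continuous_on_eq_continuous_at)
qed

lemma Ck_local:
  "(\<And>w0. \<exists>r>0. \<exists>h. Ck k h \<and> (\<forall>w\<in>ball w0 r. F w = h w)) \<Longrightarrow> Ck k (F::real^'n \<Rightarrow> real)"
proof (induction k arbitrary: F)
  case 0
  then show ?case using cont_local[of F] by simp
next
  case (Suc k)
  have cont: "continuous_on UNIV F"
    using cont_local[of F] Suc.prems Ck_cont by metis
  have "\<exists>D. has_partial F i D \<and> Ck k D" for i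
  proof -
    from Suc.prems have "\<forall>w0. \<exists>r. r > 0 \<and> (\<exists>h. Ck (Suc k) h \<and> (\<forall>w\<in>ball w0 r. F w = h w))" by blast
    then obtain R H where RH: "\<And>w0. R w0 > 0 \<and> Ck (Suc k) (H w0) \<and> (\<forall>w\<in>ball w0 (R w0). F w = H w0 w)"
      by metis
    have "\<forall>w0. \<exists>Dh. has_partial (H w0) i Dh \<and> Ck k Dh" using RH by simp
    then obtain DH where DH: "\<And>w0. has_partial (H w0) i (DH w0) \<and> Ck k (DH w0)" by metis
    define D where "D w = DH w w" for w
    have pd: "has_partial F i D"
    proof (rule has_partial_local)
      fix x
      have "R x > 0" "has_partial (H x) i (DH x)" "\<forall>w\<in>ball x (R x). F w = H x w" "D x = DH x x"
        using RH[of x] DH[of x] D_def by auto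
      then show "\<exists>r>0. \<exists>h Dh. has_partial h i Dh \<and> (\<forall>w\<in>ball x r. F w = h w) \<and> D x = Dh x"
        by blast
    qed
    have "DH w w = DH w0 w" if "w \<in> ball w0 (R w0)" for w w0
    proof -
      have "((\<lambda>t. F (w + t *\<^sub>R axis i 1)) has_real_derivative DH w w) (at 0)"
        using deriv_local[of "ball w (R w)" w F "H w" i "DH w w"] RH DH
        unfolding has_partial_def by auto
      moreover have "((\<lambda>t. F (w + t *\<^sub>R axis i 1)) has_real_derivative DH w0 w) (at 0)"
        using deriv_local[of "ball w0 (R w0)" w F "H w0" i "DH w0 w"] RH DH that
        unfolding has_partial_def by auto
      ultimately show ?thesis using DERIV_unique by blast
    qed
    then have "Ck k D"
    proof (intro Suc.IH)
      fix w0
      assume A: "\<And>w w0. w \<in> ball w0 (R w0) \<Longrightarrow> DH w w = DH w0 w"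
      have "R w0 > 0" "Ck k (DH w0)" "\<forall>w\<in>ball w0 (R w0). D w = DH w0 w"
        using RH[of w0] DH[of w0] A D_def by auto
      then show "\<exists>r>0. \<exists>h. Ck k h \<and> (\<forall>w\<in>ball w0 r. D w = h w)" by blast
    qed
    with pd show ?thesis by blast
  qed
  with cont show ?case by simp
qed

lemma smooth_local:
  "(\<And>w0. \<exists>r>0. \<exists>h. smooth h \<and> (\<forall>w\<in>ball w0 r. F w = h w)) \<Longrightarrow> smooth (F::real^'n \<Rightarrow> real)"
  unfolding smooth_def by (metis Ck_local)


definition kenum :: "nat \<Rightarrow> int^'n" where "kenum = from_nat_into UNIV"

definition cubeQ :: "real \<Rightarrow> (real^'n) set" where
  "cubeQ c = {x. \<forall>i. c \<le> x $ i \<and> x $ i < c + 1}"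

lemma infinite_intvec: "infinite (UNIV :: (int^'n) set)"
proof
  assume "finite (UNIV :: (int^'n) set)"
  moreover have "inj (\<lambda>m::int. (vec m :: int^'n))" by (auto simp: inj_def vec_eq_iff)
  ultimately have "finite (UNIV :: int set)" using finite_imageD by (metis finite_subset top_greatest)
  then show False by simp
qed

lemma kenum_bij: "bij (kenum :: nat \<Rightarrow> int^'n)"
  unfolding kenum_def using bij_betw_from_nat_into[OF countableI_type infinite_intvec] by simp

lemma sum_single:
  fixes F :: "int^'n \<Rightarrow> ennreal"
  assumes "\<And>k. k \<noteq> k0 \<Longrightarrow> F k = 0"
  shows "(\<Sum>n. F (kenum n)) = F k0"
proof -
  obtain n0 where n0: "kenum n0 = k0" using kenum_bij by (metis bij_pointE)
  have "kenum n \<noteq> k0" if "n \<noteq> n0" for n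
    using that n0 kenum_bij by (metis bij_pointE)
  then have "(\<Sum>n. F (kenum n)) = (\<Sum>n\<in>{n0}. F (kenum n))"
    by (intro suminf_finite) (auto simp: assms)
  then show ?thesis using n0 by simp
qed

lemma lattice_vec_add: "lattice_vec (a + b) = lattice_vec a + lattice_vec b"
  by (simp add: lattice_vec_def vec_eq_iff)

lemma lattice_vec_minus: "lattice_vec (- a) = - lattice_vec a"
  by (simp add: lattice_vec_def vec_eq_iff)

lemma lattice_vec_nth[simp]: "lattice_vec k $ i = real_of_int (k $ i)"
  by (simp add: lattice_vec_def)

lemma cubeQ_unique:
  "(w + lattice_vec k \<in> cubeQ c) \<longleftrightarrow> k = (\<chi> i. - \<lfloor>w $ i - c\<rfloor>)"
proof -
  have "(c \<le> w $ i + real_of_int (k $ i) \<and> w $ i + real_of_int (k $ i) < c + 1) \<longleftrightarrow> k $ i = - \<lfloor>w $ i - c\<rfloor>" for i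
  proof -
    have "(c \<le> w $ i + real_of_int (k $ i) \<and> w $ i + real_of_int (k $ i) < c + 1) \<longleftrightarrow>
          (real_of_int (- k $ i) \<le> w $ i - c \<and> w $ i - c < real_of_int (- k $ i) + 1)"
      by auto
    also have "\<dots> \<longleftrightarrow> \<lfloor>w $ i - c\<rfloor> = - k $ i" by (simp add: floor_eq_iff)
    finally show ?thesis by auto
  qed
  then show ?thesis unfolding cubeQ_def by (auto simp: vec_eq_iff)
qed

lemma cubeQ_sets[measurable]: "cubeQ c \<in> sets (borel :: (real^'n) measure)"
proof -
  have "cubeQ c = (\<Inter>i. {x::real^'n. c \<le> x $ i} \<inter> {x. x $ i < c + 1})"
    unfolding cubeQ_def by auto
  also have "\<dots> \<in> sets borel"
    by (intro sets.countable_INT' countable_finite) (auto intro!: sets.Int)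
  finally show ?thesis .
qed

lemma sum_cube_indicator:
  "(\<Sum>n. indicator (cubeQ c) (w + lattice_vec (kenum n)) :: ennreal) = 1"
proof -
  have "(\<Sum>n. indicator (cubeQ c) (w + lattice_vec (kenum n)) :: ennreal)
        = indicator (cubeQ c) (w + lattice_vec (\<chi> i. - \<lfloor>w $ i - c\<rfloor>))"
    by (rule sum_single[where F="\<lambda>k. indicator (cubeQ c) (w + lattice_vec k)"])
       (simp add: cubeQ_unique)
  also have "\<dots> = 1" using cubeQ_unique[of w "\<chi> i. - \<lfloor>w $ i - c\<rfloor>" c] by (simp add: indicator_def)
  finally show ?thesis .
qed

lemma nn_integral_translate:
  fixes G :: "real^'n \<Rightarrow> ennreal"
  assumes [measurable]: "G \<in> borel_measurable borel"
  shows "(\<integral>\<^sup>+x. G x \<partial>lborel) = (\<integral>\<^sup>+x. G (a + x) \<partial>lborel)"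
proof -
  have "(\<integral>\<^sup>+x. G x \<partial>lborel) = (\<integral>\<^sup>+x. G x \<partial>distr lborel borel ((+) a))"
    by (simp add: lborel_distr_plus)
  also have "\<dots> = (\<integral>\<^sup>+x. G (a + x) \<partial>lborel)"
    by (subst nn_integral_distr) auto
  finally show ?thesis .
qed

lemma sum_cube_indicator':
  fixes w :: "real^'n"
  shows "(\<Sum>n. indicator (cubeQ c) (w - lattice_vec (kenum n)) :: ennreal) = 1"
proof -
  have "(\<Sum>n. indicator (cubeQ c) (w - lattice_vec (kenum n)) :: ennreal)
        = indicator (cubeQ c) (w - lattice_vec (\<chi> i. \<lfloor>w $ i - c\<rfloor>))"
  proof (rule sum_single[where F="\<lambda>k. indicator (cubeQ c) (w - lattice_vec k)"])
    fix k :: "int^'n" assume "k \<noteq> (\<chi> i. \<lfloor>w $ i - c\<rfloor>)"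
    then have "- k \<noteq> (\<chi> i. - \<lfloor>w $ i - c\<rfloor>)" by (auto simp: vec_eq_iff)
    then have "w + lattice_vec (- k) \<notin> cubeQ c" using cubeQ_unique by blast
    then show "(indicator (cubeQ c) (w - lattice_vec k) :: ennreal) = 0"
      by (simp add: lattice_vec_minus)
  qed
  also have "\<dots> = 1"
  proof -
    have "w + lattice_vec (- (\<chi> i. \<lfloor>w $ i - c\<rfloor>)) \<in> cubeQ c"
      using cubeQ_unique[of w "- (\<chi> i. \<lfloor>w $ i - c\<rfloor>)" c] by (simp add: vec_eq_iff)
    then show ?thesis by (simp add: lattice_vec_minus indicator_def)
  qed
  finally show ?thesis .
qed

lemma unfold_cube:
  fixes F :: "real^'n \<Rightarrow> ennreal"
  assumes [measurable]: "F \<in> borel_measurable borel"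
  shows "(\<integral>\<^sup>+y. F y \<partial>lborel) = (\<integral>\<^sup>+x. indicator (cubeQ c) x * (\<Sum>n. F (x + lattice_vec (kenum n))) \<partial>lborel)"
proof -
  let ?L = "\<lambda>n. lattice_vec (kenum n) :: real^'n"
  have "(\<integral>\<^sup>+y. F y \<partial>lborel) = (\<integral>\<^sup>+y. (\<Sum>n. indicator (cubeQ c) (y - ?L n) * F y) \<partial>lborel)"
  proof (rule nn_integral_cong)
    fix y
    have "(\<Sum>n. indicator (cubeQ c) (y - ?L n) * F y) = F y * (\<Sum>n. indicator (cubeQ c) (y - ?L n))"
      by (subst ennreal_suminf_cmult[symmetric]) (simp add: mult.commute)
    then show "F y = (\<Sum>n. indicator (cubeQ c) (y - ?L n) * F y)"
      by (simp add: sum_cube_indicator')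
  qed
  also have "\<dots> = (\<Sum>n. \<integral>\<^sup>+y. indicator (cubeQ c) (y - ?L n) * F y \<partial>lborel)"
    by (rule nn_integral_suminf) measurable
  also have "\<dots> = (\<Sum>n. \<integral>\<^sup>+x. indicator (cubeQ c) x * F (x + ?L n) \<partial>lborel)"
  proof (rule suminf_cong)
    fix n
    have "(\<integral>\<^sup>+y. indicator (cubeQ c) (y - ?L n) * F y \<partial>lborel)
       = (\<integral>\<^sup>+x. indicator (cubeQ c) ((?L n + x) - ?L n) * F (?L n + x) \<partial>lborel)"
      by (rule nn_integral_translate) measurable
    then show "(\<integral>\<^sup>+y. indicator (cubeQ c) (y - ?L n) * F y \<partial>lborel)
       = (\<integral>\<^sup>+x. indicator (cubeQ c) x * F (x + ?L n) \<partial>lborel)"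
      by (simp add: add.commute)
  qed
  also have "\<dots> = (\<integral>\<^sup>+x. (\<Sum>n. indicator (cubeQ c) x * F (x + ?L n)) \<partial>lborel)"
    by (rule nn_integral_suminf[symmetric]) measurable
  also have "\<dots> = (\<integral>\<^sup>+x. indicator (cubeQ c) x * (\<Sum>n. F (x + ?L n)) \<partial>lborel)"
    by simp
  finally show ?thesis .
qed

lemma hyperplane_null: "{x::real^'n. x $ i = c} \<in> null_sets lborel"
proof -
  have "negligible {x::real^'n. x \<bullet> axis i 1 = c}"
    by (rule negligible_standard_hyperplane) simp
  then have "{x::real^'n. x $ i = c} \<in> null_sets lebesgue"
    by (simp add: negligible_iff_null_sets cart_eq_inner_axis)
  moreover have "{x::real^'n. x $ i = c} \<in> sets lborel" by measurable
  ultimately show ?thesis using null_sets_completion_iff by blast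
qed

lemma torus_cube_AE: "AE x in lborel. indicator (torus_cube :: (real^'n) set) x = (indicator (cubeQ 0) x :: ennreal)"
proof -
  have "AE x::real^'n in lborel. \<forall>i\<in>UNIV. x $ i \<noteq> 1"
  proof (intro AE_finite_allI)
    fix i :: 'n
    show "AE x::real^'n in lborel. x $ i \<noteq> 1" using AE_not_in[OF hyperplane_null[of i 1]] by simp
  qed simp
  then show ?thesis
    by (rule eventually_mono) (auto simp: indicator_def torus_cube_def cubeQ_def less_le)
qed

lemma set_nn_T_Q: "(\<integral>\<^sup>+x\<in>torus_cube. f x \<partial>lborel) = (\<integral>\<^sup>+x\<in>cubeQ 0. f x \<partial>lborel)"
  by (rule nn_integral_cong_AE) (rule eventually_mono[OF torus_cube_AE], simp)

lemma periodize:
  fixes H \<rho> \<phi> :: "real^'n \<Rightarrow> ennreal"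
  assumes [measurable]: "H \<in> borel_measurable borel" "\<rho> \<in> borel_measurable borel"
    and per: "\<And>y k. H (y + lattice_vec k) = H y"
    and phi: "\<And>w. (\<Sum>n. \<rho> (w + lattice_vec (kenum n))) = \<phi> w"
  shows "(\<integral>\<^sup>+y. H y * \<rho> (y - x) \<partial>lborel) = (\<integral>\<^sup>+y\<in>torus_cube. H y * \<phi> (y - x) \<partial>lborel)"
proof -
  have "(\<integral>\<^sup>+y. H y * \<rho> (y - x) \<partial>lborel)
     = (\<integral>\<^sup>+y. indicator (cubeQ 0) y * (\<Sum>n. H (y + lattice_vec (kenum n)) * \<rho> (y + lattice_vec (kenum n) - x)) \<partial>lborel)"
    by (rule unfold_cube) measurable
  also have "\<dots> = (\<integral>\<^sup>+y\<in>cubeQ 0. H y * \<phi> (y - x) \<partial>lborel)"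
  proof (rule nn_integral_cong)
    fix y
    have "(\<Sum>n. H (y + lattice_vec (kenum n)) * \<rho> (y + lattice_vec (kenum n) - x))
        = (\<Sum>n. H y * \<rho> ((y - x) + lattice_vec (kenum n)))"
      by (simp add: per algebra_simps)
    also have "\<dots> = H y * \<phi> (y - x)" by (simp add: phi)
    finally show "indicator (cubeQ 0) y * (\<Sum>n. H (y + lattice_vec (kenum n)) * \<rho> (y + lattice_vec (kenum n) - x))
       = H y * \<phi> (y - x) * indicator (cubeQ 0) y" by (simp add: mult.commute)
  qed
  also have "\<dots> = (\<integral>\<^sup>+y\<in>torus_cube. H y * \<phi> (y - x) \<partial>lborel)"
    by (rule set_nn_T_Q[symmetric])
  finally show ?thesis .
qed


definition rnd :: "real^'n \<Rightarrow> real^'n" where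
  "rnd w = lattice_vec (\<chi> i. \<lfloor>w $ i + 1/2\<rfloor>)"

definition per :: "(real^'n \<Rightarrow> real) \<Rightarrow> real^'n \<Rightarrow> real" where
  "per \<rho> w = \<rho> (w - rnd w)"

lemma rnd_shift: "rnd (w + lattice_vec k) = rnd w + lattice_vec k"
proof -
  have "\<lfloor>w $ i + real_of_int (k $ i) + 1/2\<rfloor> = \<lfloor>w $ i + 1/2\<rfloor> + k $ i" for i
    by (metis add.commute add.left_commute floor_add_int)
  then show ?thesis unfolding rnd_def lattice_vec_def by (simp add: vec_eq_iff)
qed

lemma per_periodic: "per \<rho> (w + lattice_vec k) = per \<rho> w"
  unfolding per_def rnd_shift by simp

lemma floor_half_unique:
  fixes a :: real and k :: int
  assumes "\<bar>a + k\<bar> < 1/2"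
  shows "k = - \<lfloor>a + 1/2\<rfloor>"
proof -
  have "- real_of_int k \<le> a + 1/2" "a + 1/2 < - real_of_int k + 1" using assms by (simp_all add: abs_less_iff, linarith+)
  then have "\<lfloor>a + 1/2\<rfloor> = - k" by (simp add: floor_eq_iff)
  then show ?thesis by simp
qed

lemma per_sum:
  fixes \<rho> :: "real^'n \<Rightarrow> real"
  assumes supp: "\<And>v. s \<le> norm v \<Longrightarrow> \<rho> v = 0" and s: "s \<le> 1/2"
  shows "(\<Sum>n. ennreal (\<rho> (w + lattice_vec (kenum n)))) = ennreal (per \<rho> w)"
proof -
  let ?k0 = "- (\<chi> i. \<lfloor>w $ i + 1/2\<rfloor>) :: int^'n"
  have "(\<Sum>n. ennreal (\<rho> (w + lattice_vec (kenum n)))) = ennreal (\<rho> (w + lattice_vec ?k0))"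
  proof (rule sum_single[where F="\<lambda>k. ennreal (\<rho> (w + lattice_vec k))"])
    fix k :: "int^'n" assume "k \<noteq> ?k0"
    then obtain i where i: "k $ i \<noteq> - \<lfloor>w $ i + 1/2\<rfloor>" by (auto simp: vec_eq_iff)
    have "1/2 \<le> \<bar>w $ i + k $ i\<bar>" using floor_half_unique[of "w $ i" "k $ i"] i by linarith
    also have "\<dots> = \<bar>(w + lattice_vec k) $ i\<bar>" by simp
    also have "\<dots> \<le> norm (w + lattice_vec k)" by (rule component_le_norm_cart)
    finally show "ennreal (\<rho> (w + lattice_vec k)) = 0" using supp s by simp
  qed
  also have "w + lattice_vec ?k0 = w - rnd w" by (simp add: rnd_def lattice_vec_minus)
  finally show ?thesis by (simp add: per_def)
qed

lemma per_sum_minus: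
  fixes \<rho> :: "real^'n \<Rightarrow> real"
  assumes supp: "\<And>v. s \<le> norm v \<Longrightarrow> \<rho> v = 0" and s: "s \<le> 1/2"
  shows "(\<Sum>n. ennreal (\<rho> (w - lattice_vec (kenum n)))) = ennreal (per \<rho> w)"
proof -
  let ?k0 = "(\<chi> i. \<lfloor>w $ i + 1/2\<rfloor>) :: int^'n"
  have "(\<Sum>n. ennreal (\<rho> (w - lattice_vec (kenum n)))) = ennreal (\<rho> (w - lattice_vec ?k0))"
  proof (rule sum_single[where F="\<lambda>k. ennreal (\<rho> (w - lattice_vec k))"])
    fix k :: "int^'n" assume "k \<noteq> ?k0"
    then obtain i where i: "k $ i \<noteq> \<lfloor>w $ i + 1/2\<rfloor>" by (auto simp: vec_eq_iff)
    have "1/2 \<le> \<bar>w $ i + (- k $ i)\<bar>" using floor_half_unique[of "w $ i" "- k $ i"] i by linarith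
    also have "\<dots> = \<bar>(w - lattice_vec k) $ i\<bar>" by simp
    also have "\<dots> \<le> norm (w - lattice_vec k)" by (rule component_le_norm_cart)
    finally show "ennreal (\<rho> (w - lattice_vec k)) = 0" using supp s by simp
  qed
  also have "w - lattice_vec ?k0 = w - rnd w" by (simp add: rnd_def)
  finally show ?thesis by (simp add: per_def)
qed

lemma floor_local_scalar:
  fixes a b s r :: real
  assumes "\<bar>b - a\<bar> < r" "r = (1/2 - s)/2" "0 \<le> s" "s \<le> 1/2"
    and ne: "\<lfloor>a + 1/2\<rfloor> \<noteq> \<lfloor>b + 1/2\<rfloor>"
  shows "s \<le> \<bar>b - \<lfloor>a + 1/2\<rfloor>\<bar> \<and> s \<le> \<bar>b - \<lfloor>b + 1/2\<rfloor>\<bar>"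
proof -
  define p where "p = \<lfloor>a + 1/2\<rfloor>"
  define q where "q = \<lfloor>b + 1/2\<rfloor>"
  have p: "p \<le> a + 1/2" "a + 1/2 < p + 1" unfolding p_def by linarith+
  have q: "q \<le> b + 1/2" "b + 1/2 < q + 1" unfolding q_def by linarith+
  have "p < q \<or> q < p" using ne unfolding p_def q_def by linarith
  then show ?thesis
  proof
    assume "p < q" then have "real_of_int p + 1 \<le> real_of_int q" by linarith
    then show ?thesis using p q assms(1-4) unfolding p_def[symmetric] q_def[symmetric] by (auto simp: abs_if)
  next
    assume "q < p" then have "real_of_int q + 1 \<le> real_of_int p" by linarith
    then show ?thesis using p q assms(1-4) unfolding p_def[symmetric] q_def[symmetric] by (auto simp: abs_if)
  qed
qed

lemma per_local:
  fixes \<rho> :: "real^'n \<Rightarrow> real"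
  assumes supp: "\<And>v. s \<le> norm v \<Longrightarrow> \<rho> v = 0" and s: "0 \<le> s" "s \<le> 1/2"
    and w: "dist w w0 < (1/2 - s)/2"
  shows "per \<rho> w = \<rho> (w - rnd w0)"
proof (cases "rnd w = rnd w0")
  case True then show ?thesis by (simp add: per_def)
next
  case False
  then obtain i where i: "\<lfloor>w0 $ i + 1/2\<rfloor> \<noteq> \<lfloor>w $ i + 1/2\<rfloor>"
    by (auto simp: rnd_def lattice_vec_def vec_eq_iff) (metis)
  have "\<bar>w $ i - w0 $ i\<bar> \<le> dist w w0"
    using component_le_norm_cart[of "w - w0" i] by (simp add: dist_norm)
  then have "\<bar>w $ i - w0 $ i\<bar> < (1/2 - s)/2" using w by linarith
  from floor_local_scalar[OF this refl s i]
  have A: "s \<le> \<bar>w $ i - \<lfloor>w0 $ i + 1/2\<rfloor>\<bar>" "s \<le> \<bar>w $ i - \<lfloor>w $ i + 1/2\<rfloor>\<bar>" by auto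
  have "s \<le> norm (w - rnd w0)"
    using A(1) component_le_norm_cart[of "w - rnd w0" i] by (simp add: rnd_def)
  moreover have "s \<le> norm (w - rnd w)"
    using A(2) component_le_norm_cart[of "w - rnd w" i] by (simp add: rnd_def)
  ultimately show ?thesis using supp by (simp add: per_def)
qed

lemma smooth_per:
  fixes \<rho> :: "real^'n \<Rightarrow> real"
  assumes supp: "\<And>v. s \<le> norm v \<Longrightarrow> \<rho> v = 0" and s: "0 \<le> s" "s < 1/2"
    and sm: "smooth \<rho>"
  shows "smooth (per \<rho>)"
proof (rule smooth_local)
  fix w0 :: "real^'n"
  have "smooth (\<lambda>v. 1 * \<rho> (1 *\<^sub>R v + (- rnd w0)))" using smooth_affine[OF sm] by blast
  moreover have "\<forall>w\<in>ball w0 ((1/2 - s)/2). per \<rho> w = 1 * \<rho> (1 *\<^sub>R w + (- rnd w0))"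
    using per_local[OF supp s(1)] s by (auto simp: dist_commute)
  moreover have "(1/2 - s)/2 > 0" using s by simp
  ultimately show "\<exists>r>0. \<exists>h. smooth h \<and> (\<forall>w\<in>ball w0 r. per \<rho> w = h w)" by blast
qed

lemma has_partial_per:
  fixes \<rho> :: "real^'n \<Rightarrow> real"
  assumes supp: "\<And>v. s \<le> norm v \<Longrightarrow> \<rho> v = 0" and suppD: "\<And>v. s \<le> norm v \<Longrightarrow> D v = 0"
    and s: "0 \<le> s" "s < 1/2"
    and hp: "has_partial \<rho> i D"
  shows "has_partial (per \<rho>) i (per D)"
proof (rule has_partial_local)
  fix x :: "real^'n"
  have "has_partial (\<lambda>v. 1 * \<rho> (1 *\<^sub>R v + (- rnd x))) i (\<lambda>v. (1 * 1) * D (1 *\<^sub>R v + (- rnd x)))"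
    by (rule has_partial_affine[OF hp])
  moreover have "\<forall>w\<in>ball x ((1/2 - s)/2). per \<rho> w = 1 * \<rho> (1 *\<^sub>R w + (- rnd x))"
    using per_local[OF supp s(1)] s by (auto simp: dist_commute)
  moreover have "per D x = (1 * 1) * D (1 *\<^sub>R x + (- rnd x))" by (simp add: per_def)
  moreover have "(1/2 - s)/2 > 0" using s by simp
  ultimately show "\<exists>r>0. \<exists>h Dh. has_partial h i Dh \<and> (\<forall>w\<in>ball x r. per \<rho> w = h w) \<and> per D x = Dh x"
    by blast
qed

lemma partial_supp:
  fixes f :: "real^'n \<Rightarrow> real"
  assumes hp: "has_partial f i D" and z: "\<And>v. t < norm v \<Longrightarrow> f v = 0" and v: "t < norm v"
  shows "D v = 0"
proof -
  have "open {v::real^'n. t < norm v}" by (intro open_Collect_less continuous_intros)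
  moreover have "((\<lambda>t. (\<lambda>_. 0::real) (v + t *\<^sub>R axis i 1)) has_real_derivative 0) (at 0)" by simp
  ultimately have "((\<lambda>t. f (v + t *\<^sub>R axis i 1)) has_real_derivative 0) (at 0)"
    using deriv_local[of "{v. t < norm v}" v f "\<lambda>_. 0" i 0] v z by auto
  moreover have "((\<lambda>t. f (v + t *\<^sub>R axis i 1)) has_real_derivative D v) (at 0)"
    using hp unfolding has_partial_def by blast
  ultimately show ?thesis using DERIV_unique by blast
qed


lemma nn_integral_affine:
  fixes G :: "real^'n \<Rightarrow> ennreal"
  assumes [measurable]: "G \<in> borel_measurable borel" and c: "c \<noteq> 0"
  shows "(\<integral>\<^sup>+x. G x \<partial>lborel) = ennreal (\<bar>c\<bar> ^ CARD('n)) * (\<integral>\<^sup>+x. G (t + c *\<^sub>R x) \<partial>lborel)"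
proof -
  have eq: "(lborel :: (real^'n) measure) = density (distr lborel borel (\<lambda>x. t + c *\<^sub>R x)) (\<lambda>_. \<bar>c\<bar> ^ DIM(real^'n))"
    using lborel_affine[OF c] by blast
  have "(\<integral>\<^sup>+x. G x \<partial>lborel) = integral\<^sup>N (density (distr lborel borel (\<lambda>x. t + c *\<^sub>R x)) (\<lambda>_. \<bar>c\<bar> ^ DIM(real^'n))) G"
    by (rule arg_cong[where f="\<lambda>M. integral\<^sup>N M G", OF eq])
  also have "\<dots> = (\<integral>\<^sup>+x. ennreal (\<bar>c\<bar> ^ DIM(real^'n)) * G x \<partial>distr lborel borel (\<lambda>x. t + c *\<^sub>R x))"
    by (subst nn_integral_density) auto
  also have "\<dots> = (\<integral>\<^sup>+x. ennreal (\<bar>c\<bar> ^ DIM(real^'n)) * G (t + c *\<^sub>R x) \<partial>lborel)"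
    by (subst nn_integral_distr) auto
  also have "\<dots> = ennreal (\<bar>c\<bar> ^ CARD('n)) * (\<integral>\<^sup>+x. G (t + c *\<^sub>R x) \<partial>lborel)"
    by (subst nn_integral_cmult) auto
  finally show ?thesis .
qed

lemma T1:
  fixes H :: "real^'n \<Rightarrow> ennreal"
  assumes [measurable]: "H \<in> borel_measurable borel" and per: "\<And>y k. H (y + lattice_vec k) = H y"
  shows "(\<integral>\<^sup>+y\<in>torus_cube. H (a + y) \<partial>lborel) = (\<integral>\<^sup>+y\<in>torus_cube. H y \<partial>lborel)"
proof -
  have "(\<integral>\<^sup>+y. H y * indicator (cubeQ 0) (y - a) \<partial>lborel) = (\<integral>\<^sup>+y\<in>torus_cube. H y * 1 \<partial>lborel)"
    by (rule periodize) (auto simp: per sum_cube_indicator)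
  moreover have "(\<integral>\<^sup>+y. H y * indicator (cubeQ 0) (y - a) \<partial>lborel) = (\<integral>\<^sup>+y. H (a + y) * indicator (cubeQ 0) ((a + y) - a) \<partial>lborel)"
    by (rule nn_integral_translate) measurable
  ultimately have "(\<integral>\<^sup>+y\<in>cubeQ 0. H (a + y) \<partial>lborel) = (\<integral>\<^sup>+y\<in>torus_cube. H y \<partial>lborel)" by simp
  then show ?thesis by (simp add: set_nn_T_Q)
qed

lemma tdist_periodic:
  fixes x y :: "real^'n"
  shows "tdist x (y + lattice_vec k) = tdist x y"
proof -
  have E: "(\<lambda>j. norm (x - (y + lattice_vec k) - lattice_vec j)) = (\<lambda>j. norm (x - y - lattice_vec j)) \<circ> (\<lambda>j. k + j)"
    by (auto simp: lattice_vec_add algebra_simps)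
  moreover have r: "range ((+) k) = (UNIV :: (int^'n) set)" by (rule surj_plus)
  show ?thesis unfolding tdist_def by (simp only: E image_comp[symmetric] r)
qed

lemma lattice_vec_zero[simp]: "lattice_vec 0 = 0"
  by (simp add: lattice_vec_def vec_eq_iff)

lemma tdist_lower: "tdist x y \<le> norm (x - y - lattice_vec k)"
  unfolding tdist_def by (rule cInf_lower) (auto intro: bdd_belowI[where m=0])

lemma tdist_nonneg: "0 \<le> tdist x y"
  unfolding tdist_def by (rule cInf_greatest) auto

lemma tdist_lip: "tdist x y \<le> tdist x y' + norm (y - y')"
proof -
  have "tdist x y - norm (y - y') \<le> tdist x y'"
    unfolding tdist_def[of x y']
  proof (rule cInf_greatest)
    show "range (\<lambda>k. norm (x - y' - lattice_vec k)) \<noteq> {}" by simp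
    fix z assume "z \<in> range (\<lambda>k. norm (x - y' - lattice_vec k))"
    then obtain k where z: "z = norm (x - y' - lattice_vec k)" by auto
    have "tdist x y \<le> norm (x - y - lattice_vec k)" by (rule tdist_lower)
    also have "\<dots> \<le> norm (x - y' - lattice_vec k) + norm (y - y')"
      using norm_triangle_ineq[of "x - y' - lattice_vec k" "y' - y"] by (simp add: algebra_simps norm_minus_commute)
    finally show "tdist x y - norm (y - y') \<le> z" using z by simp
  qed
  then show ?thesis by simp
qed

lemma tdist_cont: "continuous_on UNIV (tdist x)"
proof -
  have "\<bar>tdist x y - tdist x y'\<bar> \<le> dist y y'" for y y'
    using tdist_lip[of x y y'] tdist_lip[of x y' y] by (simp add: dist_norm norm_minus_commute abs_le_iff)
  then have "lipschitz_on 1 UNIV (tdist x)" by (intro lipschitz_onI) (auto simp: dist_real_def)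
  then show ?thesis by (rule lipschitz_on_continuous_on)
qed

lemma tdist_meas[measurable]: "tdist x \<in> borel_measurable borel"
  using tdist_cont borel_measurable_continuous_onI by blast

lemma norm_le_componentwise:
  fixes u v :: "real^'n"
  assumes "\<And>i. \<bar>u $ i\<bar> \<le> \<bar>v $ i\<bar>"
  shows "norm u \<le> norm v"
  unfolding norm_vec_def by (rule L2_set_mono) (use assms in auto)

lemma tdist_cube:
  assumes "\<And>i. \<bar>h $ i\<bar> \<le> 1/2"
  shows "tdist x (x + h) = norm h"
  unfolding tdist_def
proof (rule cInf_eq_minimum)
  show "norm h \<in> range (\<lambda>k. norm (x - (x + h) - lattice_vec k))"
    by (rule range_eqI[where x=0]) simp
  fix z assume "z \<in> range (\<lambda>k. norm (x - (x + h) - lattice_vec k))"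
  then obtain k where z: "z = norm (x - (x + h) - lattice_vec k)" by auto
  have "\<bar>h $ i\<bar> \<le> \<bar>(x - (x + h) - lattice_vec k) $ i\<bar>" for i
  proof (cases "k $ i = 0")
    case True then show ?thesis by simp
  next
    case False
    then have "1 \<le> \<bar>real_of_int (k $ i)\<bar>" by linarith
    then show ?thesis using assms[of i] by simp
  qed
  then show "norm h \<le> z" unfolding z by (rule norm_le_componentwise)
qed

lemma cs_scalar:
  fixes a b c :: real
  assumes "0 \<le> a" "0 \<le> b" "0 \<le> c" and H: "\<And>s. s > 0 \<Longrightarrow> 2 * c \<le> s * a + b / s"
  shows "c\<^sup>2 \<le> a * b"
proof (cases "a = 0 \<or> b = 0")
  case True
  have "c \<le> 0"
  proof (rule ccontr)
    assume "\<not> c \<le> 0" then have c0: "c > 0" by simp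
    show False
    proof (cases "a = 0")
      case True
      have pos: "b / c + 1 > 0" using assms c0 by (simp add: add_nonneg_pos)
      have "2 * c \<le> b / (b / c + 1)" using H[OF pos] True by simp
      also have "\<dots> < c" using c0 assms(2) by (simp add: field_simps)
      finally show False using c0 by simp
    next
      case False then have a0: "a > 0" using assms by simp
      have b0: "b = 0" using True False by simp
      have "2 * c \<le> (c / a) * a" using H[of "c / a"] a0 c0 b0 by simp
      also have "\<dots> = c" using a0 by simp
      finally show False using c0 by simp
    qed
  qed
  then show ?thesis using assms by simp
next
  case False
  then have a0: "a > 0" and b0: "b > 0" using assms by auto
  define s where "s = sqrt (b / a)"
  have s0: "s > 0" using a0 b0 by (simp add: s_def)
  have "s * a = sqrt (a * b)" using a0 b0 by (simp add: s_def real_sqrt_divide real_sqrt_mult field_simps)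
  moreover have "b / s = sqrt (a * b)" using a0 b0
    by (simp add: s_def real_sqrt_divide real_sqrt_mult field_simps)
  ultimately have "c \<le> sqrt (a * b)" using H[OF s0] by simp
  then have "c\<^sup>2 \<le> (sqrt (a * b))\<^sup>2" using assms by (intro power_mono) auto
  then show ?thesis using a0 b0 by simp
qed


lemma cs_integral:
  fixes f w :: "'a \<Rightarrow> real"
  assumes w: "\<And>x. 0 \<le> w x" and iw: "integrable M w" and if2: "integrable M (\<lambda>x. (f x)\<^sup>2 * w x)"
    and fm[measurable]: "f \<in> borel_measurable M"
  shows "(\<integral>x. f x * w x \<partial>M)\<^sup>2 \<le> (\<integral>x. w x \<partial>M) * (\<integral>x. (f x)\<^sup>2 * w x \<partial>M)"
proof -
  have wm[measurable]: "w \<in> borel_measurable M" using iw by (rule borel_measurable_integrable)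
  have ptw: "2 * (\<bar>f x\<bar> * w x) \<le> s * ((f x)\<^sup>2 * w x) + w x / s" if "s > 0" for s x
  proof -
    have "0 \<le> (s * \<bar>f x\<bar> - 1)\<^sup>2" by simp
    then have "2 * s * \<bar>f x\<bar> \<le> s * s * (f x)\<^sup>2 + 1" by (simp add: power2_eq_square algebra_simps)
    then have "2 * \<bar>f x\<bar> \<le> s * (f x)\<^sup>2 + 1 / s" using that by (simp add: field_simps power2_eq_square)
    from mult_right_mono[OF this w[of x]] show ?thesis by (simp add: algebra_simps)
  qed
  have iaf: "integrable M (\<lambda>x. \<bar>f x\<bar> * w x)"
  proof (rule Bochner_Integration.integrable_bound[of _ "\<lambda>x. w x + (f x)\<^sup>2 * w x"])
    show "integrable M (\<lambda>x. w x + (f x)\<^sup>2 * w x)" using iw if2 by simp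
    show "(\<lambda>x. \<bar>f x\<bar> * w x) \<in> borel_measurable M" by measurable
    show "AE x in M. norm (\<bar>f x\<bar> * w x) \<le> norm (w x + (f x)\<^sup>2 * w x)"
    proof (rule AE_I2)
      fix x
      have t: "0 \<le> (\<bar>f x\<bar> - 1)\<^sup>2" "0 \<le> \<bar>f x\<bar>" by simp_all
      have "(f x)\<^sup>2 = \<bar>f x\<bar> * \<bar>f x\<bar>" by (simp add: power2_eq_square)
      then have "\<bar>f x\<bar> \<le> 1 + (f x)\<^sup>2" using t unfolding power2_eq_square by (simp add: algebra_simps)
      from mult_right_mono[OF this w[of x]] show "norm (\<bar>f x\<bar> * w x) \<le> norm (w x + (f x)\<^sup>2 * w x)"
        using w[of x] by (simp add: abs_mult algebra_simps)
    qed
  qed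
  define a where "a = (\<integral>x. (f x)\<^sup>2 * w x \<partial>M)"
  define b where "b = (\<integral>x. w x \<partial>M)"
  define c where "c = (\<integral>x. \<bar>f x\<bar> * w x \<partial>M)"
  have "c\<^sup>2 \<le> a * b"
  proof (rule cs_scalar)
    show "0 \<le> a" unfolding a_def using w by (intro integral_nonneg_AE) auto
    show "0 \<le> b" unfolding b_def using w by (intro integral_nonneg_AE) auto
    show "0 \<le> c" unfolding c_def using w by (intro integral_nonneg_AE) auto
    fix s :: real assume s: "s > 0"
    have "2 * c = (\<integral>x. 2 * (\<bar>f x\<bar> * w x) \<partial>M)" unfolding c_def by simp
    also have "\<dots> \<le> (\<integral>x. s * ((f x)\<^sup>2 * w x) + w x / s \<partial>M)"
      using ptw[OF s] iaf iw if2 by (intro integral_mono) auto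
    also have "\<dots> = s * a + b / s" unfolding a_def b_def using iw if2 by simp
    finally show "2 * c \<le> s * a + b / s" .
  qed
  moreover have "\<bar>\<integral>x. f x * w x \<partial>M\<bar> \<le> c"
  proof -
    have "\<bar>\<integral>x. f x * w x \<partial>M\<bar> \<le> (\<integral>x. \<bar>f x * w x\<bar> \<partial>M)" by (rule integral_abs_bound)
    also have "\<dots> = c" unfolding c_def using w by (simp add: abs_mult)
    finally show ?thesis .
  qed
  then have "(\<integral>x. f x * w x \<partial>M)\<^sup>2 \<le> c\<^sup>2"
    by (metis abs_ge_zero power2_abs power_mono)
  ultimately show ?thesis unfolding a_def b_def by (simp add: mult.commute)
qed

lemma ennreal_mult_split:
  assumes "0 \<le> b"
  shows "ennreal (a * b) = ennreal a * ennreal b"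
  using ennreal_mult''[OF assms] .

lemma periodize_real:
  fixes h \<rho> \<phi> :: "real^'n \<Rightarrow> real"
  assumes hm[measurable]: "h \<in> borel_measurable borel" and rm[measurable]: "\<rho> \<in> borel_measurable borel"
    and pm[measurable]: "\<phi> \<in> borel_measurable borel"
    and per: "\<And>y k. h (y + lattice_vec k) = h y"
    and \<rho>0: "\<And>v. 0 \<le> \<rho> v" and \<phi>0: "\<And>v. 0 \<le> \<phi> v"
    and phi: "\<And>w. (\<Sum>n. ennreal (\<rho> (w + lattice_vec (kenum n)))) = ennreal (\<phi> w)"
    and fin: "(\<integral>\<^sup>+y\<in>torus_cube. ennreal (\<bar>h y\<bar> * \<phi> (y - x)) \<partial>lborel) < \<infinity>"
  shows "integrable lborel (\<lambda>y. h y * \<rho> (y - x))"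
    "set_integrable lborel torus_cube (\<lambda>y. h y * \<phi> (y - x))"
    "(LINT y|lborel. h y * \<rho> (y - x)) = (LINT y:torus_cube|lborel. h y * \<phi> (y - x))"
proof -
  have P: "(\<integral>\<^sup>+y. ennreal (H y) * ennreal (\<rho> (y - x)) \<partial>lborel) = (\<integral>\<^sup>+y\<in>torus_cube. ennreal (H y) * ennreal (\<phi> (y - x)) \<partial>lborel)"
    if [measurable]: "H \<in> borel_measurable borel" and "\<And>y k. H (y + lattice_vec k) = H y" for H :: "real^'n \<Rightarrow> real"
    by (rule periodize) (use that phi in auto)
  have Tm[measurable]: "torus_cube \<in> sets (borel :: (real^'n) measure)"
  proof -
    have "torus_cube = (\<Inter>i. {x::real^'n. 0 \<le> x $ i} \<inter> {x. x $ i \<le> 1})"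
      unfolding torus_cube_def by auto
    also have "\<dots> \<in> sets borel"
      by (intro sets.countable_INT' countable_finite) (auto intro!: sets.Int)
    finally show ?thesis .
  qed
  have PA: "(\<integral>\<^sup>+y. ennreal (\<bar>h y\<bar> * \<rho> (y - x)) \<partial>lborel) = (\<integral>\<^sup>+y\<in>torus_cube. ennreal (\<bar>h y\<bar> * \<phi> (y - x)) \<partial>lborel)"
    using P[of "\<lambda>y. \<bar>h y\<bar>"] per by (simp add: ennreal_mult_split \<rho>0 \<phi>0)
  show i1: "integrable lborel (\<lambda>y. h y * \<rho> (y - x))"
    unfolding integrable_iff_bounded using PA fin \<rho>0 by (simp add: abs_mult)
  show i2: "set_integrable lborel torus_cube (\<lambda>y. h y * \<phi> (y - x))"
    unfolding set_integrable_def integrable_iff_bounded using fin \<phi>0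
    by (simp add: abs_mult mult_ac indicator_mult_ennreal)
  have Pp: "(\<integral>\<^sup>+y. ennreal (h y * \<rho> (y - x)) \<partial>lborel) = (\<integral>\<^sup>+y. ennreal (indicator torus_cube y *\<^sub>R (h y * \<phi> (y - x))) \<partial>lborel)"
  proof -
    have "(\<integral>\<^sup>+y. ennreal (h y * \<rho> (y - x)) \<partial>lborel) = (\<integral>\<^sup>+y. ennreal (h y) * ennreal (\<rho> (y - x)) \<partial>lborel)"
      by (intro nn_integral_cong) (simp add: ennreal_mult'' \<rho>0)
    also have "\<dots> = (\<integral>\<^sup>+y\<in>torus_cube. ennreal (h y) * ennreal (\<phi> (y - x)) \<partial>lborel)"
      by (rule P) (use per in auto)
    also have "\<dots> = (\<integral>\<^sup>+y. ennreal (indicator torus_cube y *\<^sub>R (h y * \<phi> (y - x))) \<partial>lborel)"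
      by (intro nn_integral_cong) (simp add: ennreal_mult'' \<phi>0 indicator_def)
    finally show ?thesis .
  qed
  have Pm: "(\<integral>\<^sup>+y. ennreal (- (h y * \<rho> (y - x))) \<partial>lborel) = (\<integral>\<^sup>+y. ennreal (- (indicator torus_cube y *\<^sub>R (h y * \<phi> (y - x)))) \<partial>lborel)"
  proof -
    have "(\<integral>\<^sup>+y. ennreal (- (h y * \<rho> (y - x))) \<partial>lborel) = (\<integral>\<^sup>+y. ennreal (- h y) * ennreal (\<rho> (y - x)) \<partial>lborel)"
    proof (intro nn_integral_cong)
      fix y show "ennreal (- (h y * \<rho> (y - x))) = ennreal (- h y) * ennreal (\<rho> (y - x))"
        using ennreal_mult''[OF \<rho>0, of "- h y" "y - x"] by simp
    qed
    also have "\<dots> = (\<integral>\<^sup>+y\<in>torus_cube. ennreal (- h y) * ennreal (\<phi> (y - x)) \<partial>lborel)"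
      by (rule P) (use per in auto)
    also have "\<dots> = (\<integral>\<^sup>+y. ennreal (- (indicator torus_cube y *\<^sub>R (h y * \<phi> (y - x)))) \<partial>lborel)"
    proof (intro nn_integral_cong)
      fix y show "ennreal (- h y) * ennreal (\<phi> (y - x)) * indicator torus_cube y = ennreal (- (indicator torus_cube y *\<^sub>R (h y * \<phi> (y - x))))"
        using ennreal_mult''[OF \<phi>0, of "- h y" "y - x"] by (simp add: indicator_def)
    qed
    finally show ?thesis .
  qed
  have i2': "integrable lborel (\<lambda>y. indicator torus_cube y *\<^sub>R (h y * \<phi> (y - x)))"
    using i2 unfolding set_integrable_def .
  have "(LINT y|lborel. h y * \<rho> (y - x)) = enn2real (\<integral>\<^sup>+y. ennreal (h y * \<rho> (y - x)) \<partial>lborel) - enn2real (\<integral>\<^sup>+y. ennreal (- (h y * \<rho> (y - x))) \<partial>lborel)"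
    by (rule real_lebesgue_integral_def[OF i1])
  also have "\<dots> = enn2real (\<integral>\<^sup>+y. ennreal (indicator torus_cube y *\<^sub>R (h y * \<phi> (y - x))) \<partial>lborel) - enn2real (\<integral>\<^sup>+y. ennreal (- (indicator torus_cube y *\<^sub>R (h y * \<phi> (y - x)))) \<partial>lborel)"
    by (simp only: Pp Pm)
  also have "\<dots> = (LINT y|lborel. indicator torus_cube y *\<^sub>R (h y * \<phi> (y - x)))"
    by (rule real_lebesgue_integral_def[OF i2', symmetric])
  finally show "(LINT y|lborel. h y * \<rho> (y - x)) = (LINT y:torus_cube|lborel. h y * \<phi> (y - x))"
    by (simp add: set_lebesgue_integral_def)
qed


lemma bound_supp:
  fixes f :: "real^'n \<Rightarrow> real"
  assumes "continuous_on UNIV f" "\<And>v. 1 < norm v \<Longrightarrow> f v = 0"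
  shows "\<exists>B. \<forall>v. \<bar>f v\<bar> \<le> B"
proof -
  have "compact (f ` cball 0 1)"
    by (rule compact_continuous_image) (use assms(1) continuous_on_subset in auto)
  then obtain a where a: "\<forall>y\<in>f ` cball 0 1. norm y \<le> a" using compact_imp_bounded bounded_iff by metis
  have "\<bar>f v\<bar> \<le> max a 0" for v
  proof (cases "norm v \<le> 1")
    case True then show ?thesis using a by force
  next
    case False then show ?thesis using assms(2) by simp
  qed
  then show ?thesis by blast
qed

lemma integrable_supp:
  fixes f :: "real^'n \<Rightarrow> real"
  assumes "continuous_on UNIV f" "\<And>v. 1 < norm v \<Longrightarrow> f v = 0"
  shows "integrable lborel f"
proof -
  have "integrable lborel (\<lambda>x. indicator (cball 0 1) x *\<^sub>R f x)"
    by (rule borel_integrable_compact) (use assms(1) continuous_on_subset in auto)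
  moreover have "(\<lambda>x. indicator (cball 0 1) x *\<^sub>R f x) = f"
  proof (rule ext)
    fix x show "indicator (cball 0 1) x *\<^sub>R f x = f x"
      by (cases "norm x \<le> 1") (auto simp: assms(2) indicator_def)
  qed
  ultimately show ?thesis by simp
qed

locale moll_setup =
  fixes \<Omega> :: "real^'n \<Rightarrow> real"
  assumes sm: "smooth \<Omega>" and nn: "\<And>v. 0 \<le> \<Omega> v" and supp: "\<And>v. 1 < norm v \<Longrightarrow> \<Omega> v = 0"
    and int1: "integral\<^sup>L lborel \<Omega> = 1"
begin

definition D\<Omega> :: "'n \<Rightarrow> real^'n \<Rightarrow> real" where
  "D\<Omega> i = (SOME D. has_partial \<Omega> i D \<and> smooth D)"

lemma D\<Omega>: "has_partial \<Omega> i (D\<Omega> i)" "smooth (D\<Omega> i)"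
proof -
  have "\<exists>D. has_partial \<Omega> i D \<and> smooth D" using smooth_partial[OF sm] by metis
  then have "has_partial \<Omega> i (D\<Omega> i) \<and> smooth (D\<Omega> i)" unfolding D\<Omega>_def by (rule someI_ex)
  then show "has_partial \<Omega> i (D\<Omega> i)" "smooth (D\<Omega> i)" by auto
qed

lemma D\<Omega>_supp: "1 < norm v \<Longrightarrow> D\<Omega> i v = 0"
  using partial_supp[OF D\<Omega>(1)] supp by blast

lemma \<Omega>_cont: "continuous_on UNIV \<Omega>" using sm smooth_cont by blast
lemma D\<Omega>_cont: "continuous_on UNIV (D\<Omega> i)" using D\<Omega>(2) smooth_cont by blast

lemma \<Omega>_meas[measurable]: "\<Omega> \<in> borel_measurable borel"
  using \<Omega>_cont borel_measurable_continuous_onI by blast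
lemma D\<Omega>_meas[measurable]: "D\<Omega> i \<in> borel_measurable borel"
  using D\<Omega>_cont borel_measurable_continuous_onI by blast

lemma \<Omega>_int: "integrable lborel \<Omega>" by (rule integrable_supp[OF \<Omega>_cont supp])
lemma D\<Omega>_int: "integrable lborel (D\<Omega> i)" by (rule integrable_supp[OF D\<Omega>_cont D\<Omega>_supp])

lemma \<Omega>_bound: "\<exists>B. \<forall>v. \<bar>\<Omega> v\<bar> \<le> B" by (rule bound_supp[OF \<Omega>_cont supp])
lemma D\<Omega>_bound: "\<exists>B. \<forall>v. \<bar>D\<Omega> i v\<bar> \<le> B" by (rule bound_supp[OF D\<Omega>_cont D\<Omega>_supp])

definition A :: "'n \<Rightarrow> real" where "A i = (LINT v|lborel. \<bar>D\<Omega> i v\<bar>)"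

lemma A_nonneg: "0 \<le> A i" unfolding A_def by simp

lemma nn_A: "(\<integral>\<^sup>+v. ennreal \<bar>D\<Omega> i v\<bar> \<partial>lborel) = ennreal (A i)"
  unfolding A_def by (rule nn_integral_eq_integral) (use D\<Omega>_int in auto)

lemma nn_\<Omega>: "(\<integral>\<^sup>+v. ennreal (\<Omega> v) \<partial>lborel) = 1"
  using nn_integral_eq_integral[OF \<Omega>_int] nn int1 by simp

definition \<rho> :: "real \<Rightarrow> real^'n \<Rightarrow> real" where
  "\<rho> \<delta> v = (1 / \<delta> ^ CARD('n)) * \<Omega> ((1/\<delta>) *\<^sub>R v + 0)"

definition D\<rho> :: "real \<Rightarrow> 'n \<Rightarrow> real^'n \<Rightarrow> real" where
  "D\<rho> \<delta> i v = ((1 / \<delta> ^ CARD('n)) * (1/\<delta>)) * D\<Omega> i ((1/\<delta>) *\<^sub>R v + 0)"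

lemma \<rho>_nonneg: "0 < \<delta> \<Longrightarrow> 0 \<le> \<rho> \<delta> v"
  unfolding \<rho>_def using nn by simp

lemma \<rho>_supp: assumes "0 < \<delta>" "\<delta> < norm v" shows "\<rho> \<delta> v = 0"
proof -
  have "1 < norm ((1/\<delta>) *\<^sub>R v)" using assms by (simp add: field_simps)
  then show ?thesis unfolding \<rho>_def using supp by simp
qed

lemma D\<rho>_supp: assumes "0 < \<delta>" "\<delta> < norm v" shows "D\<rho> \<delta> i v = 0"
proof -
  have "1 < norm ((1/\<delta>) *\<^sub>R v)" using assms by (simp add: field_simps)
  then show ?thesis unfolding D\<rho>_def using D\<Omega>_supp by simp
qed

lemma \<rho>_smooth: "smooth (\<rho> \<delta>)"
  unfolding \<rho>_def[abs_def] by (rule smooth_affine[OF sm])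

lemma D\<rho>_smooth: "smooth (D\<rho> \<delta> i)"
  unfolding D\<rho>_def[abs_def] by (rule smooth_affine[OF D\<Omega>(2)])

lemma \<rho>_partial: "has_partial (\<rho> \<delta>) i (D\<rho> \<delta> i)"
  unfolding \<rho>_def[abs_def] D\<rho>_def[abs_def] by (rule has_partial_affine[OF D\<Omega>(1)])

lemma \<rho>_meas[measurable]: "\<rho> \<delta> \<in> borel_measurable borel"
  using \<rho>_smooth smooth_cont borel_measurable_continuous_onI by blast
lemma D\<rho>_meas[measurable]: "D\<rho> \<delta> i \<in> borel_measurable borel"
  using D\<rho>_smooth smooth_cont borel_measurable_continuous_onI by blast

lemma \<rho>_bound: "\<exists>B. \<forall>v. \<bar>\<rho> \<delta> v\<bar> \<le> B"
proof -
  obtain B where B: "\<And>v. \<bar>\<Omega> v\<bar> \<le> B" using \<Omega>_bound by blast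
  have "\<bar>\<rho> \<delta> v\<bar> \<le> \<bar>1 / \<delta> ^ CARD('n)\<bar> * B" for v
    unfolding \<rho>_def abs_mult by (rule mult_left_mono[OF B]) simp
  then show ?thesis by blast
qed

lemma D\<rho>_bound: "\<exists>B. \<forall>v. \<bar>D\<rho> \<delta> i v\<bar> \<le> B"
proof -
  obtain B where B: "\<And>v. \<bar>D\<Omega> i v\<bar> \<le> B" using D\<Omega>_bound by blast
  have "\<bar>D\<rho> \<delta> i v\<bar> \<le> \<bar>(1 / \<delta> ^ CARD('n)) * (1/\<delta>)\<bar> * B" for v
    unfolding D\<rho>_def abs_mult[of _ "D\<Omega> i _"] by (rule mult_left_mono[OF B]) simp
  then show ?thesis by blast
qed

lemma nn_\<rho>: assumes "0 < \<delta>" shows "(\<integral>\<^sup>+v. ennreal (\<rho> \<delta> v) \<partial>lborel) = 1"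
proof -
  have "(\<integral>\<^sup>+v. ennreal (\<rho> \<delta> v) \<partial>lborel) = ennreal (\<bar>\<delta>\<bar> ^ CARD('n)) * (\<integral>\<^sup>+x. ennreal (\<rho> \<delta> (0 + \<delta> *\<^sub>R x)) \<partial>lborel)"
    by (rule nn_integral_affine) (use assms in auto)
  also have "(\<lambda>x. ennreal (\<rho> \<delta> (0 + \<delta> *\<^sub>R x))) = (\<lambda>x. ennreal (1 / \<delta> ^ CARD('n)) * ennreal (\<Omega> x))"
  proof (rule ext)
    fix x
    have "ennreal (1 / \<delta> ^ CARD('n) * \<Omega> x) = ennreal (1 / \<delta> ^ CARD('n)) * ennreal (\<Omega> x)"
      using nn assms by (intro ennreal_mult) auto
    then show "ennreal (\<rho> \<delta> (0 + \<delta> *\<^sub>R x)) = ennreal (1 / \<delta> ^ CARD('n)) * ennreal (\<Omega> x)"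
      using assms by (simp add: \<rho>_def)
  qed
  also have "(\<integral>\<^sup>+x. ennreal (1 / \<delta> ^ CARD('n)) * ennreal (\<Omega> x) \<partial>lborel) = ennreal (1 / \<delta> ^ CARD('n))"
    by (subst nn_integral_cmult) (auto simp: nn_\<Omega>)
  also have "ennreal (\<bar>\<delta>\<bar> ^ CARD('n)) * ennreal (1 / \<delta> ^ CARD('n)) = 1"
    using assms by (simp add: ennreal_mult[symmetric])
  finally show ?thesis .
qed

lemma nn_D\<rho>: assumes "0 < \<delta>" shows "(\<integral>\<^sup>+v. ennreal \<bar>D\<rho> \<delta> i v\<bar> \<partial>lborel) = ennreal (A i / \<delta>)"
proof -
  have "(\<integral>\<^sup>+v. ennreal \<bar>D\<rho> \<delta> i v\<bar> \<partial>lborel) = ennreal (\<bar>\<delta>\<bar> ^ CARD('n)) * (\<integral>\<^sup>+x. ennreal \<bar>D\<rho> \<delta> i (0 + \<delta> *\<^sub>R x)\<bar> \<partial>lborel)"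
    by (rule nn_integral_affine) (use assms in auto)
  also have "(\<lambda>x. ennreal \<bar>D\<rho> \<delta> i (0 + \<delta> *\<^sub>R x)\<bar>) = (\<lambda>x. ennreal (1 / \<delta> ^ CARD('n) * (1 / \<delta>)) * ennreal \<bar>D\<Omega> i x\<bar>)"
  proof (rule ext)
    fix x
    have "ennreal (1 / \<delta> ^ CARD('n) * (1 / \<delta>) * \<bar>D\<Omega> i x\<bar>) = ennreal (1 / \<delta> ^ CARD('n) * (1 / \<delta>)) * ennreal \<bar>D\<Omega> i x\<bar>"
      using assms by (intro ennreal_mult) auto
    then show "ennreal \<bar>D\<rho> \<delta> i (0 + \<delta> *\<^sub>R x)\<bar> = ennreal (1 / \<delta> ^ CARD('n) * (1 / \<delta>)) * ennreal \<bar>D\<Omega> i x\<bar>"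
      using assms by (simp add: D\<rho>_def abs_mult)
  qed
  also have "(\<integral>\<^sup>+x. ennreal (1 / \<delta> ^ CARD('n) * (1 / \<delta>)) * ennreal \<bar>D\<Omega> i x\<bar> \<partial>lborel) = ennreal (1 / \<delta> ^ CARD('n) * (1 / \<delta>)) * ennreal (A i)"
    by (subst nn_integral_cmult) (auto simp: nn_A)
  also have "ennreal (\<bar>\<delta>\<bar> ^ CARD('n)) * (ennreal (1 / \<delta> ^ CARD('n) * (1 / \<delta>)) * ennreal (A i)) = ennreal (A i / \<delta>)"
    using assms A_nonneg[of i] by (simp add: ennreal_mult[symmetric] mult.assoc[symmetric])
  finally show ?thesis .
qed

end


context moll_setup begin

lemma meas_test:
  fixes g :: "real^'n \<Rightarrow> real^'n"
  assumes [measurable]: "g \<in> borel_measurable borel"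
  shows "(\<lambda>(x,h). ennreal (\<rho> \<epsilon> h * (norm (g (x + h) - g x))\<^sup>2)) \<in> borel_measurable (lborel \<Otimes>\<^sub>M lborel)"
  by measurable

lemma NL_inner:
  fixes g :: "real^'n \<Rightarrow> real^'n" and M :: "real \<Rightarrow> real"
  assumes gm[measurable]: "g \<in> borel_measurable borel" and per: "\<And>y k. g (y + lattice_vec k) = g y"
    and e: "0 < \<epsilon>" "\<epsilon> < 1/2" and MM: "\<And>h. M (norm h) = \<rho> \<epsilon> h"
  shows "(\<integral>\<^sup>+y\<in>torus_cube. ennreal ((norm (g x - g y))\<^sup>2 / \<epsilon>\<^sup>2 * M (tdist x y)) \<partial>lborel)
       = (\<integral>\<^sup>+h. ennreal (\<rho> \<epsilon> h * (norm (g (x + h) - g x))\<^sup>2 / \<epsilon>\<^sup>2) \<partial>lborel)"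
proof -
  define e1 :: "real^'n" where "e1 = axis undefined 1"
  have ne: "norm (r *\<^sub>R e1) = r" if "0 \<le> r" for r using that by (simp add: e1_def)
  define H where "H y = ennreal ((norm (g x - g y))\<^sup>2 / \<epsilon>\<^sup>2 * \<rho> \<epsilon> (tdist x y *\<^sub>R e1))" for y
  have HM: "ennreal ((norm (g x - g y))\<^sup>2 / \<epsilon>\<^sup>2 * M (tdist x y)) = H y" for y
  proof -
    have "M (tdist x y) = \<rho> \<epsilon> (tdist x y *\<^sub>R e1)"
      using MM[of "tdist x y *\<^sub>R e1"] ne[OF tdist_nonneg, of x y] by simp
    then show ?thesis unfolding H_def by simp
  qed
  have Hm[measurable]: "H \<in> borel_measurable borel" unfolding H_def by measurable
  have Hper: "H (y + lattice_vec k) = H y" for y k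
    unfolding H_def by (simp add: per tdist_periodic)
  have "(\<integral>\<^sup>+y. H y * indicator (cubeQ (-1/2)) (y - x) \<partial>lborel) = (\<integral>\<^sup>+y\<in>torus_cube. H y * 1 \<partial>lborel)"
    by (rule periodize) (auto simp: Hper sum_cube_indicator)
  moreover have "(\<integral>\<^sup>+y. H y * indicator (cubeQ (-1/2)) (y - x) \<partial>lborel) = (\<integral>\<^sup>+h. H (x + h) * indicator (cubeQ (-1/2)) ((x + h) - x) \<partial>lborel)"
    by (rule nn_integral_translate) measurable
  moreover have "H (x + h) * indicator (cubeQ (-1/2)) ((x + h) - x) = ennreal (\<rho> \<epsilon> h * (norm (g (x + h) - g x))\<^sup>2 / \<epsilon>\<^sup>2)" for h
  proof (cases "h \<in> cubeQ (-1/2)")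
    case True
    have "\<bar>h $ i\<bar> \<le> 1/2" for i
    proof -
      have "- (1/2) \<le> h $ i" "h $ i < 1/2" using True unfolding cubeQ_def by auto
      then show ?thesis by linarith
    qed
    then have "tdist x (x + h) = norm h" by (rule tdist_cube)
    moreover have "\<rho> \<epsilon> (norm h *\<^sub>R e1) = \<rho> \<epsilon> h"
      using MM[of "norm h *\<^sub>R e1"] MM[of h] by (simp add: e1_def)
    ultimately show ?thesis using True unfolding H_def by (simp add: norm_minus_commute mult_ac)
  next
    case False
    then obtain i where "\<not> (- 1 / 2 \<le> h $ i \<and> h $ i < - 1 / 2 + 1)" unfolding cubeQ_def by auto
    then have "h $ i < -1/2 \<or> 1/2 \<le> h $ i" by linarith
    then have "1/2 \<le> \<bar>h $ i\<bar>" by auto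
    also have "\<dots> \<le> norm h" by (rule component_le_norm_cart)
    finally have "\<rho> \<epsilon> h = 0" using e by (intro \<rho>_supp) auto
    then show ?thesis using False by simp
  qed
  moreover have "(\<integral>\<^sup>+y\<in>torus_cube. ennreal ((norm (g x - g y))\<^sup>2 / \<epsilon>\<^sup>2 * M (tdist x y)) \<partial>lborel) = (\<integral>\<^sup>+y\<in>torus_cube. H y \<partial>lborel)"
    by (simp only: HM)
  ultimately show ?thesis by simp
qed

end


definition Dg :: "(real^'n \<Rightarrow> real^'n) \<Rightarrow> real^'n \<Rightarrow> ennreal" where
  "Dg g h = (\<integral>\<^sup>+x\<in>torus_cube. ennreal ((norm (g (x + h) - g x))\<^sup>2) \<partial>lborel)"

lemma torus_cube_sets[measurable]: "torus_cube \<in> sets (borel :: (real^'n) measure)"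
proof -
  have "torus_cube = (\<Inter>i. {x::real^'n. 0 \<le> x $ i} \<inter> {x. x $ i \<le> 1})"
    unfolding torus_cube_def by auto
  also have "\<dots> \<in> sets borel"
    by (intro sets.countable_INT' countable_finite) (auto intro!: sets.Int)
  finally show ?thesis .
qed

lemma Dg_meas[measurable]:
  assumes [measurable]: "g \<in> borel_measurable borel"
  shows "Dg g \<in> borel_measurable borel"
proof -
  have Tm[measurable]: "torus_cube \<in> sets (borel :: (real^'n) measure)"
  proof -
    have "torus_cube = (\<Inter>i. {x::real^'n. 0 \<le> x $ i} \<inter> {x. x $ i \<le> 1})"
      unfolding torus_cube_def by auto
    also have "\<dots> \<in> sets borel"
      by (intro sets.countable_INT' countable_finite) (auto intro!: sets.Int)
    finally show ?thesis .
  qed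
  have "(\<lambda>h. \<integral>\<^sup>+x. ennreal ((norm (g (x + h) - g x))\<^sup>2) * indicator torus_cube x \<partial>lborel) \<in> borel_measurable lborel"
    by measurable
  then show ?thesis unfolding Dg_def by simp
qed

lemma Dg_mult:
  fixes g :: "real^'n \<Rightarrow> real^'n"
  assumes gm[measurable]: "g \<in> borel_measurable borel" and per: "\<And>y k. g (y + lattice_vec k) = g y"
  shows "Dg g (real m *\<^sub>R h) \<le> ennreal ((real m)\<^sup>2) * Dg g h"
proof -
  let ?t = "\<lambda>x j. (norm (g ((real j *\<^sub>R h + x) + h) - g (real j *\<^sub>R h + x)))\<^sup>2"
  have ptw: "(norm (g (x + real m *\<^sub>R h) - g x))\<^sup>2 \<le> real m * (\<Sum>j<m. ?t x j)" for x
  proof -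
    have "g (x + real m *\<^sub>R h) - g x = (\<Sum>j<m. g (x + real (Suc j) *\<^sub>R h) - g (x + real j *\<^sub>R h))"
      using sum_lessThan_telescope[of "\<lambda>j. g (x + real j *\<^sub>R h)" m] by simp
    also have "\<dots> = (\<Sum>j<m. g ((real j *\<^sub>R h + x) + h) - g (real j *\<^sub>R h + x))"
      by (intro sum.cong) (auto simp: algebra_simps)
    finally have eq: "g (x + real m *\<^sub>R h) - g x = (\<Sum>j<m. g ((real j *\<^sub>R h + x) + h) - g (real j *\<^sub>R h + x))" .
    have "norm (g (x + real m *\<^sub>R h) - g x) \<le> (\<Sum>j<m. norm (g ((real j *\<^sub>R h + x) + h) - g (real j *\<^sub>R h + x)))"
      unfolding eq by (rule norm_sum)
    then have "(norm (g (x + real m *\<^sub>R h) - g x))\<^sup>2 \<le> (\<Sum>j<m. norm (g ((real j *\<^sub>R h + x) + h) - g (real j *\<^sub>R h + x)))\<^sup>2"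
      by (intro power_mono) auto
    also have "\<dots> \<le> (\<Sum>j<m. ?t x j) * real (card {..<m})"
      by (rule sum_squared_le_sum_of_squares)
    finally show ?thesis by (simp add: mult.commute)
  qed
  have sumeq: "(\<integral>\<^sup>+x. (\<Sum>j<m. ennreal (?t x j) * indicator torus_cube x) \<partial>lborel) = (\<Sum>j<m. \<integral>\<^sup>+x\<in>torus_cube. ennreal (?t x j) \<partial>lborel)"
    by (rule nn_integral_sum) measurable
  have "Dg g (real m *\<^sub>R h) \<le> (\<integral>\<^sup>+x\<in>torus_cube. ennreal (real m * (\<Sum>j<m. ?t x j)) \<partial>lborel)"
    unfolding Dg_def by (intro nn_integral_mono) (auto intro!: mult_right_mono ennreal_leI ptw)
  also have "\<dots> = (\<integral>\<^sup>+x. ennreal (real m) * (\<Sum>j<m. ennreal (?t x j) * indicator torus_cube x) \<partial>lborel)"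
    by (intro nn_integral_cong) (simp add: ennreal_mult sum_nonneg sum_distrib_right[symmetric] mult.assoc)
  also have "\<dots> = ennreal (real m) * (\<integral>\<^sup>+x. (\<Sum>j<m. ennreal (?t x j) * indicator torus_cube x) \<partial>lborel)"
    by (rule nn_integral_cmult) measurable

  also have "\<dots> = ennreal (real m) * (\<Sum>j<m. Dg g h)"
  proof -
    have "(\<integral>\<^sup>+x\<in>torus_cube. ennreal (?t x j) \<partial>lborel) = Dg g h" for j
      unfolding Dg_def
    proof (rule T1[where H="\<lambda>y. ennreal ((norm (g (y + h) - g y))\<^sup>2)"])
      show "(\<lambda>y. ennreal ((norm (g (y + h) - g y))\<^sup>2)) \<in> borel_measurable borel" by measurable
      fix y :: "real^'n" and k
      have "y + lattice_vec k + h = (y + h) + lattice_vec k" by (simp add: algebra_simps)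
      then show "ennreal ((norm (g (y + lattice_vec k + h) - g (y + lattice_vec k)))\<^sup>2) = ennreal ((norm (g (y + h) - g y))\<^sup>2)"
        by (simp only: per)
    qed
    then show ?thesis by (simp only: sumeq)
  qed
  also have "\<dots> = ennreal ((real m)\<^sup>2) * Dg g h"
    by (simp add: power2_eq_square ennreal_mult mult.assoc ennreal_of_nat_eq_real_of_nat)
  finally show ?thesis .
qed

context moll_setup begin

lemma scale_step:
  fixes g :: "real^'n \<Rightarrow> real^'n"
  assumes gm[measurable]: "g \<in> borel_measurable borel" and per: "\<And>y k. g (y + lattice_vec k) = g y"
    and m: "1 \<le> m" and e: "0 < \<epsilon>"
  shows "(\<integral>\<^sup>+h. ennreal (\<rho> (real m * \<epsilon>) h) * Dg g h \<partial>lborel) \<le> ennreal ((real m)\<^sup>2) * (\<integral>\<^sup>+h. ennreal (\<rho> \<epsilon> h) * Dg g h \<partial>lborel)"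
proof -
  have m0: "real m \<noteq> 0" using m by simp
  have "(\<integral>\<^sup>+h. ennreal (\<rho> (real m * \<epsilon>) h) * Dg g h \<partial>lborel)
      = ennreal (\<bar>real m\<bar> ^ CARD('n)) * (\<integral>\<^sup>+u. ennreal (\<rho> (real m * \<epsilon>) (0 + real m *\<^sub>R u)) * Dg g (0 + real m *\<^sub>R u) \<partial>lborel)"
    by (rule nn_integral_affine[OF _ m0]) measurable
  also have "\<dots> = (\<integral>\<^sup>+u. ennreal (\<rho> \<epsilon> u) * Dg g (real m *\<^sub>R u) \<partial>lborel)"
  proof -
    have "ennreal (\<bar>real m\<bar> ^ CARD('n)) * ennreal (\<rho> (real m * \<epsilon>) (0 + real m *\<^sub>R u)) = ennreal (\<rho> \<epsilon> u)" for u
    proof -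
      have "\<bar>real m\<bar> ^ CARD('n) * \<rho> (real m * \<epsilon>) (0 + real m *\<^sub>R u) = \<rho> \<epsilon> u"
        using m e by (simp add: \<rho>_def power_mult_distrib field_simps)
      then show ?thesis using m e \<rho>_nonneg[of "real m * \<epsilon>"] by (simp add: ennreal_mult[symmetric])
    qed
    then show ?thesis
      by (subst nn_integral_cmult[symmetric]) (measurable, simp add: mult.assoc[symmetric])
  qed
  also have "\<dots> \<le> (\<integral>\<^sup>+u. ennreal (\<rho> \<epsilon> u) * (ennreal ((real m)\<^sup>2) * Dg g u) \<partial>lborel)"
    by (intro nn_integral_mono mult_left_mono Dg_mult[OF gm per]) auto
  also have "\<dots> = ennreal ((real m)\<^sup>2) * (\<integral>\<^sup>+h. ennreal (\<rho> \<epsilon> h) * Dg g h \<partial>lborel)"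
    by (subst nn_integral_cmult[symmetric]) (measurable, simp add: mult_ac)
  finally show ?thesis .
qed

end


lemma integral_translate:
  fixes F :: "real^'n \<Rightarrow> real"
  assumes [measurable]: "F \<in> borel_measurable borel"
  shows "(LINT y|lborel. F y) = (LINT h|lborel. F (a + h))"
proof -
  have "(LINT y|lborel. F y) = (LINT y|distr lborel borel ((+) a). F y)"
    by (simp add: lborel_distr_plus)
  also have "\<dots> = (LINT h|lborel. F (a + h))"
    by (rule integral_distr) auto
  finally show ?thesis .
qed

lemma cs_integral2:
  fixes f u :: "'a \<Rightarrow> real"
  assumes iu: "integrable M u" and if2: "integrable M (\<lambda>x. (f x)\<^sup>2 * \<bar>u x\<bar>)"
    and fm[measurable]: "f \<in> borel_measurable M"
  shows "(\<integral>x. f x * u x \<partial>M)\<^sup>2 \<le> (\<integral>x. \<bar>u x\<bar> \<partial>M) * (\<integral>x. (f x)\<^sup>2 * \<bar>u x\<bar> \<partial>M)"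
proof -
  have um[measurable]: "u \<in> borel_measurable M" using iu by (rule borel_measurable_integrable)
  have "(\<integral>x. \<bar>f x\<bar> * \<bar>u x\<bar> \<partial>M)\<^sup>2 \<le> (\<integral>x. \<bar>u x\<bar> \<partial>M) * (\<integral>x. (\<bar>f x\<bar>)\<^sup>2 * \<bar>u x\<bar> \<partial>M)"
    by (rule cs_integral) (use iu if2 in auto)
  moreover have "\<bar>\<integral>x. f x * u x \<partial>M\<bar> \<le> (\<integral>x. \<bar>f x\<bar> * \<bar>u x\<bar> \<partial>M)"
    using integral_abs_bound[of M "\<lambda>x. f x * u x"] by (simp add: abs_mult)
  then have "(\<integral>x. f x * u x \<partial>M)\<^sup>2 \<le> (\<integral>x. \<bar>f x\<bar> * \<bar>u x\<bar> \<partial>M)\<^sup>2"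
    by (metis abs_ge_zero power2_abs power_mono)
  ultimately show ?thesis by simp
qed

lemma norm_sq_vec: "(norm (v::real^'n))\<^sup>2 = (\<Sum>i\<in>UNIV. (v $ i)\<^sup>2)"
  by (simp add: norm_vec_def L2_set_def sum_nonneg)

lemma torus_cube_cbox: "torus_cube = cbox (0::real^'n) (vec 1)"
  unfolding torus_cube_def by (auto simp: mem_box_cart)

lemma torus_cube_fin: "emeasure lborel (torus_cube :: (real^'n) set) < \<infinity>"
  unfolding torus_cube_cbox by (rule emeasure_compact_finite) simp

lemma per_bound: "(\<And>v. \<bar>F v\<bar> \<le> B) \<Longrightarrow> \<bar>per F w\<bar> \<le> B"
  unfolding per_def by blast

lemma periodize_x:
  fixes \<rho> \<phi> :: "real^'n \<Rightarrow> ennreal"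
  assumes [measurable]: "\<rho> \<in> borel_measurable borel"
    and phi: "\<And>w. (\<Sum>n. \<rho> (w - lattice_vec (kenum n))) = \<phi> w"
  shows "(\<integral>\<^sup>+x. \<rho> (y - x) \<partial>lborel) = (\<integral>\<^sup>+x\<in>torus_cube. \<phi> (y - x) \<partial>lborel)"
proof -
  have "(\<integral>\<^sup>+x. \<rho> (y - x) \<partial>lborel) = (\<integral>\<^sup>+x. indicator (cubeQ 0) x * (\<Sum>n. \<rho> (y - (x + lattice_vec (kenum n)))) \<partial>lborel)"
    by (rule unfold_cube) measurable
  also have "\<dots> = (\<integral>\<^sup>+x\<in>cubeQ 0. \<phi> (y - x) \<partial>lborel)"
    by (intro nn_integral_cong) (simp add: phi[symmetric] algebra_simps mult.commute)
  also have "\<dots> = (\<integral>\<^sup>+x\<in>torus_cube. \<phi> (y - x) \<partial>lborel)"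
    by (rule set_nn_T_Q[symmetric])
  finally show ?thesis .
qed


lemma H1_facts:
  fixes f :: "real^'n \<Rightarrow> real" and g :: "real^'n \<Rightarrow> real^'n"
  assumes H: "H1_weak_grad f g"
  shows "\<And>y k. f (y + lattice_vec k) = f y" "\<And>y k. g (y + lattice_vec k) = g y"
    "f \<in> borel_measurable borel" "g \<in> borel_measurable borel"
    "(\<integral>\<^sup>+y\<in>torus_cube. ennreal ((f y)\<^sup>2) \<partial>lborel) < \<infinity>"
    "(\<integral>\<^sup>+y\<in>torus_cube. ennreal ((norm (g y))\<^sup>2) \<partial>lborel) < \<infinity>"
    "set_integrable lborel torus_cube (\<lambda>x. (f x)\<^sup>2)"
    "\<And>\<phi> i D. smooth \<phi> \<Longrightarrow> periodic \<phi> \<Longrightarrow> has_partial \<phi> i D \<Longrightarrow>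
        (LINT x:torus_cube|lborel. f x * D x) = - (LINT x:torus_cube|lborel. g x $ i * \<phi> x)"
proof -
  note * = H[unfolded H1_weak_grad_def periodic_def]
  show "\<And>y k. f (y + lattice_vec k) = f y" "\<And>y k. g (y + lattice_vec k) = g y" using * by auto
  show "f \<in> borel_measurable borel" "g \<in> borel_measurable borel" using * by auto
  show "set_integrable lborel torus_cube (\<lambda>x. (f x)\<^sup>2)" using * by auto
  have "integrable lborel (\<lambda>x. indicator torus_cube x *\<^sub>R (f x)\<^sup>2)" using * by (auto simp: set_integrable_def)
  then have "(\<integral>\<^sup>+x. ennreal (norm (indicator torus_cube x *\<^sub>R (f x)\<^sup>2)) \<partial>lborel) < \<infinity>"
    by (simp add: integrable_iff_bounded)
  moreover have "(\<integral>\<^sup>+x. ennreal (norm (indicator torus_cube x *\<^sub>R (f x)\<^sup>2)) \<partial>lborel) = (\<integral>\<^sup>+y\<in>torus_cube. ennreal ((f y)\<^sup>2) \<partial>lborel)"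
    by (intro nn_integral_cong) (simp add: indicator_def)
  ultimately show "(\<integral>\<^sup>+y\<in>torus_cube. ennreal ((f y)\<^sup>2) \<partial>lborel) < \<infinity>" by simp
  have "integrable lborel (\<lambda>x. indicator torus_cube x *\<^sub>R (norm (g x))\<^sup>2)" using * by (auto simp: set_integrable_def)
  then have "(\<integral>\<^sup>+x. ennreal (norm (indicator torus_cube x *\<^sub>R (norm (g x))\<^sup>2)) \<partial>lborel) < \<infinity>"
    by (simp add: integrable_iff_bounded)
  moreover have "(\<integral>\<^sup>+x. ennreal (norm (indicator torus_cube x *\<^sub>R (norm (g x))\<^sup>2)) \<partial>lborel) = (\<integral>\<^sup>+y\<in>torus_cube. ennreal ((norm (g y))\<^sup>2) \<partial>lborel)"
    by (intro nn_integral_cong) (simp add: indicator_def)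
  ultimately show "(\<integral>\<^sup>+y\<in>torus_cube. ennreal ((norm (g y))\<^sup>2) \<partial>lborel) < \<infinity>" by simp
  fix \<phi> :: "real^'n \<Rightarrow> real" and i and D :: "real^'n \<Rightarrow> real" assume "smooth \<phi>" "periodic \<phi>" "has_partial \<phi> i D"
  then show "(LINT x:torus_cube|lborel. f x * D x) = - (LINT x:torus_cube|lborel. g x $ i * \<phi> x)"
    using * unfolding periodic_def by blast
qed

context moll_setup begin

definition sd :: "real \<Rightarrow> real" where "sd \<delta> = (\<delta> + 1/2) / 2"

lemma sd_props: "0 < \<delta> \<Longrightarrow> \<delta> < 1/2 \<Longrightarrow> 0 \<le> sd \<delta> \<and> sd \<delta> < 1/2 \<and> sd \<delta> \<le> 1/2 \<and> \<delta> < sd \<delta>"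
  unfolding sd_def by auto

lemma \<rho>_supp_s: assumes "0 < \<delta>" "\<delta> < 1/2" "sd \<delta> \<le> norm v" shows "\<rho> \<delta> v = 0"
proof -
  have "\<delta> < norm v" using assms sd_props[OF assms(1,2)] by linarith
  then show ?thesis using \<rho>_supp assms(1) by blast
qed

lemma D\<rho>_supp_s: assumes "0 < \<delta>" "\<delta> < 1/2" "sd \<delta> \<le> norm v" shows "D\<rho> \<delta> i v = 0"
proof -
  have "\<delta> < norm v" using assms sd_props[OF assms(1,2)] by linarith
  then show ?thesis using D\<rho>_supp assms(1) by blast
qed

lemma per_rho_sum: assumes "0 < \<delta>" "\<delta> < 1/2"
  shows "(\<Sum>n. ennreal (\<rho> \<delta> (w + lattice_vec (kenum n)))) = ennreal (per (\<rho> \<delta>) w)"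
proof (rule per_sum[where s="sd \<delta>"])
  fix v :: "real^'n" assume "sd \<delta> \<le> norm v" then show "\<rho> \<delta> v = 0" by (rule \<rho>_supp_s[OF assms])
next
  show "sd \<delta> \<le> 1/2" using sd_props[OF assms] by simp
qed

lemma per_Drho_sum: assumes "0 < \<delta>" "\<delta> < 1/2"
  shows "(\<Sum>n. ennreal \<bar>D\<rho> \<delta> i (w + lattice_vec (kenum n))\<bar>) = ennreal \<bar>per (D\<rho> \<delta> i) w\<bar>"
proof -
  have "(\<Sum>n. ennreal \<bar>D\<rho> \<delta> i (w + lattice_vec (kenum n))\<bar>) = ennreal (per (\<lambda>v. \<bar>D\<rho> \<delta> i v\<bar>) w)"
  proof (rule per_sum[where s="sd \<delta>"])
    fix v :: "real^'n" assume "sd \<delta> \<le> norm v" then show "\<bar>D\<rho> \<delta> i v\<bar> = 0" using D\<rho>_supp_s[OF assms] by simp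
  next
    show "sd \<delta> \<le> 1/2" using sd_props[OF assms] by simp
  qed
  then show ?thesis by (simp add: per_def)
qed

lemma per_Drho_sum_minus: assumes "0 < \<delta>" "\<delta> < 1/2"
  shows "(\<Sum>n. ennreal \<bar>D\<rho> \<delta> i (w - lattice_vec (kenum n))\<bar>) = ennreal \<bar>per (D\<rho> \<delta> i) w\<bar>"
proof -
  have "(\<Sum>n. ennreal \<bar>D\<rho> \<delta> i (w - lattice_vec (kenum n))\<bar>) = ennreal (per (\<lambda>v. \<bar>D\<rho> \<delta> i v\<bar>) w)"
  proof (rule per_sum_minus[where s="sd \<delta>"])
    fix v :: "real^'n" assume "sd \<delta> \<le> norm v" then show "\<bar>D\<rho> \<delta> i v\<bar> = 0" using D\<rho>_supp_s[OF assms] by simp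
  next
    show "sd \<delta> \<le> 1/2" using sd_props[OF assms] by simp
  qed
  then show ?thesis by (simp add: per_def)
qed

lemma per_rho_smooth: assumes "0 < \<delta>" "\<delta> < 1/2" shows "smooth (per (\<rho> \<delta>))"
proof (rule smooth_per[where s="sd \<delta>"])
  fix v :: "real^'n" assume "sd \<delta> \<le> norm v" then show "\<rho> \<delta> v = 0" by (rule \<rho>_supp_s[OF assms])
qed (use sd_props[OF assms] \<rho>_smooth in auto)

lemma per_Drho_smooth: assumes "0 < \<delta>" "\<delta> < 1/2" shows "smooth (per (D\<rho> \<delta> i))"
proof (rule smooth_per[where s="sd \<delta>"])
  fix v :: "real^'n" assume "sd \<delta> \<le> norm v" then show "D\<rho> \<delta> i v = 0" by (rule D\<rho>_supp_s[OF assms])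
qed (use sd_props[OF assms] D\<rho>_smooth in auto)

lemma per_rho_partial: assumes "0 < \<delta>" "\<delta> < 1/2" shows "has_partial (per (\<rho> \<delta>)) i (per (D\<rho> \<delta> i))"
proof (rule has_partial_per[where s="sd \<delta>"])
  fix v :: "real^'n" assume "sd \<delta> \<le> norm v" then show "\<rho> \<delta> v = 0" by (rule \<rho>_supp_s[OF assms])
next
  fix v :: "real^'n" assume "sd \<delta> \<le> norm v" then show "D\<rho> \<delta> i v = 0" by (rule D\<rho>_supp_s[OF assms])
qed (use sd_props[OF assms] \<rho>_partial in auto)

lemma per_rho_meas[measurable]: assumes "0 < \<delta>" "\<delta> < 1/2" shows "per (\<rho> \<delta>) \<in> borel_measurable borel"
  using per_rho_smooth[OF assms] smooth_cont borel_measurable_continuous_onI by blast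

lemma per_Drho_meas[measurable]: assumes "0 < \<delta>" "\<delta> < 1/2" shows "per (D\<rho> \<delta> i) \<in> borel_measurable borel"
  using per_Drho_smooth[OF assms] smooth_cont borel_measurable_continuous_onI by blast

lemma LINT_\<rho>: assumes "0 < \<delta>" shows "integrable lborel (\<rho> \<delta>)" "(LINT h|lborel. \<rho> \<delta> h) = 1"
proof -
  show "integrable lborel (\<rho> \<delta>)"
    unfolding integrable_iff_bounded using nn_\<rho>[OF assms] \<rho>_nonneg[OF assms] by simp
  show "(LINT h|lborel. \<rho> \<delta> h) = 1"
    using integral_eq_nn_integral[of "\<rho> \<delta>" lborel] nn_\<rho>[OF assms] \<rho>_nonneg[OF assms] by simp
qed

end


lemma comp_le_sq: "\<bar>(v::real^'n) $ i\<bar> \<le> 1 + (norm v)\<^sup>2"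
proof -
  have a: "\<bar>v $ i\<bar> \<le> norm v" by (rule component_le_norm_cart)
  have "norm v \<le> 1 + (norm v)\<^sup>2"
  proof (cases "norm v \<le> 1")
    case True then show ?thesis by (simp add: add_increasing2)
  next
    case False
    then have "norm v * 1 \<le> norm v * norm v" by (intro mult_left_mono) auto
    then show ?thesis by (simp add: power2_eq_square)
  qed
  with a show ?thesis by linarith
qed

lemma comp_sq_le: "((v::real^'n) $ i)\<^sup>2 \<le> (norm v)\<^sup>2"
proof -
  have "\<bar>v $ i\<bar> \<le> norm v" by (rule component_le_norm_cart)
  then have "\<bar>v $ i\<bar>\<^sup>2 \<le> (norm v)\<^sup>2" by (intro power_mono) auto
  then show ?thesis by simp
qed

lemma vec_nth_meas: "(\<lambda>v::real^'n. v $ i) \<in> borel_measurable borel"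
proof -
  have "continuous_on UNIV (\<lambda>v::real^'n. v $ i)" by (intro continuous_on_component continuous_on_id)
  then show ?thesis using borel_measurable_continuous_onI by blast
qed

lemma vec_nth_meas_comp[measurable (raw)]:
  fixes f :: "'a \<Rightarrow> real^'n"
  shows "f \<in> borel_measurable M \<Longrightarrow> (\<lambda>x. f x $ i) \<in> borel_measurable M"
  using measurable_compose[OF _ vec_nth_meas] by blast

context moll_setup begin

definition Gc :: "real \<Rightarrow> (real^'n \<Rightarrow> real^'n) \<Rightarrow> 'n \<Rightarrow> real^'n \<Rightarrow> real" where
  "Gc \<delta> g i x = (LINT h|lborel. \<rho> \<delta> h * g (x + h) $ i)"

lemma fin_rho_g:
  fixes g :: "real^'n \<Rightarrow> real^'n"
  assumes gm[measurable]: "g \<in> borel_measurable borel" and per: "\<And>y k. g (y + lattice_vec k) = g y"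
    and gfin: "(\<integral>\<^sup>+y\<in>torus_cube. ennreal ((norm (g y))\<^sup>2) \<partial>lborel) < \<infinity>"
    and d: "0 < \<delta>" "\<delta> < 1/2"
  shows "(\<integral>\<^sup>+h. ennreal (\<rho> \<delta> h * (norm (g (x + h)))\<^sup>2) \<partial>lborel) < \<infinity>"
proof -
  have [measurable]: "per (\<rho> \<delta>) \<in> borel_measurable borel" using per_rho_meas[OF d] .
  obtain B where B: "\<And>v. \<bar>\<rho> \<delta> v\<bar> \<le> B" using \<rho>_bound by blast
  have "(\<integral>\<^sup>+y. ennreal ((norm (g y))\<^sup>2) * ennreal (\<rho> \<delta> (y - x)) \<partial>lborel)
      = (\<integral>\<^sup>+h. ennreal ((norm (g (x + h)))\<^sup>2) * ennreal (\<rho> \<delta> ((x + h) - x)) \<partial>lborel)"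
    by (rule nn_integral_translate) measurable
  also have "\<dots> = (\<integral>\<^sup>+h. ennreal (\<rho> \<delta> h * (norm (g (x + h)))\<^sup>2) \<partial>lborel)"
    by (intro nn_integral_cong) (simp add: ennreal_mult \<rho>_nonneg[OF d(1)] mult.commute)
  finally have e1: "(\<integral>\<^sup>+h. ennreal (\<rho> \<delta> h * (norm (g (x + h)))\<^sup>2) \<partial>lborel) = (\<integral>\<^sup>+y. ennreal ((norm (g y))\<^sup>2) * ennreal (\<rho> \<delta> (y - x)) \<partial>lborel)" ..
  have e2: "(\<integral>\<^sup>+y. ennreal ((norm (g y))\<^sup>2) * ennreal (\<rho> \<delta> (y - x)) \<partial>lborel) = (\<integral>\<^sup>+y\<in>torus_cube. ennreal ((norm (g y))\<^sup>2) * ennreal (per (\<rho> \<delta>) (y - x)) \<partial>lborel)"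
    by (rule periodize) (auto simp: per per_rho_sum[OF d])
  have "(\<integral>\<^sup>+y\<in>torus_cube. ennreal ((norm (g y))\<^sup>2) * ennreal (per (\<rho> \<delta>) (y - x)) \<partial>lborel) \<le> (\<integral>\<^sup>+y\<in>torus_cube. ennreal B * ennreal ((norm (g y))\<^sup>2) \<partial>lborel)"
  proof (intro nn_integral_mono)
    fix y
    have "per (\<rho> \<delta>) (y - x) \<le> B" using per_bound[of "\<rho> \<delta>" B "y - x", OF B] by simp
    then show "ennreal ((norm (g y))\<^sup>2) * ennreal (per (\<rho> \<delta>) (y - x)) * indicator torus_cube y \<le> ennreal B * ennreal ((norm (g y))\<^sup>2) * indicator torus_cube y"
    proof (intro mult_right_mono)
      have "ennreal (per (\<rho> \<delta>) (y - x)) \<le> ennreal B" using \<open>per (\<rho> \<delta>) (y - x) \<le> B\<close> by (rule ennreal_leI)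
      then have "ennreal ((norm (g y))\<^sup>2) * ennreal (per (\<rho> \<delta>) (y - x)) \<le> ennreal ((norm (g y))\<^sup>2) * ennreal B"
        by (rule mult_left_mono) simp
      then show "ennreal ((norm (g y))\<^sup>2) * ennreal (per (\<rho> \<delta>) (y - x)) \<le> ennreal B * ennreal ((norm (g y))\<^sup>2)"
        by (simp only: mult.commute)
    qed simp
  qed
  also have "\<dots> = ennreal B * (\<integral>\<^sup>+y\<in>torus_cube. ennreal ((norm (g y))\<^sup>2) \<partial>lborel)"
    by (subst nn_integral_cmult[symmetric]) (measurable, simp add: mult.assoc)
  also have "\<dots> < \<infinity>" using gfin by (simp add: ennreal_mult_less_top)
  finally show ?thesis using e1 e2 by simp
qed

lemma int_facts:
  fixes g :: "real^'n \<Rightarrow> real^'n"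
  assumes gm[measurable]: "g \<in> borel_measurable borel" and per: "\<And>y k. g (y + lattice_vec k) = g y"
    and gfin: "(\<integral>\<^sup>+y\<in>torus_cube. ennreal ((norm (g y))\<^sup>2) \<partial>lborel) < \<infinity>"
    and d: "0 < \<delta>" "\<delta> < 1/2"
  shows "integrable lborel (\<lambda>h. \<rho> \<delta> h * (norm (g (x + h)))\<^sup>2)"
    "integrable lborel (\<lambda>h. \<rho> \<delta> h * g (x + h) $ i)"
    "integrable lborel (\<lambda>h. ((g (x + h) - g x) $ i)\<^sup>2 * \<rho> \<delta> h)"
    "integrable lborel (\<lambda>h. \<rho> \<delta> h * (norm (g (x + h) - g x))\<^sup>2)"
proof -
  have r0: "\<And>h. 0 \<le> \<rho> \<delta> h" using \<rho>_nonneg[OF d(1)] .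
  show i1: "integrable lborel (\<lambda>h. \<rho> \<delta> h * (norm (g (x + h)))\<^sup>2)"
    unfolding integrable_iff_bounded using fin_rho_g[OF gm per gfin d, of x] r0 by simp
  have ir: "integrable lborel (\<rho> \<delta>)" using LINT_\<rho>(1)[OF d(1)] .
  show "integrable lborel (\<lambda>h. \<rho> \<delta> h * g (x + h) $ i)"
  proof (rule Bochner_Integration.integrable_bound[of _ "\<lambda>h. \<rho> \<delta> h + \<rho> \<delta> h * (norm (g (x + h)))\<^sup>2"])
    show "integrable lborel (\<lambda>h. \<rho> \<delta> h + \<rho> \<delta> h * (norm (g (x + h)))\<^sup>2)" using ir i1 by simp
    show "(\<lambda>h. \<rho> \<delta> h * g (x + h) $ i) \<in> borel_measurable lborel" by measurable
    show "AE h in lborel. norm (\<rho> \<delta> h * g (x + h) $ i) \<le> norm (\<rho> \<delta> h + \<rho> \<delta> h * (norm (g (x + h)))\<^sup>2)"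
    proof (rule AE_I2)
      fix h
      have "\<rho> \<delta> h * \<bar>g (x + h) $ i\<bar> \<le> \<rho> \<delta> h * (1 + (norm (g (x + h)))\<^sup>2)"
        using comp_le_sq r0 by (intro mult_left_mono) auto
      then show "norm (\<rho> \<delta> h * g (x + h) $ i) \<le> norm (\<rho> \<delta> h + \<rho> \<delta> h * (norm (g (x + h)))\<^sup>2)"
        using r0[of h] by (simp add: abs_mult algebra_simps)
    qed
  qed
  have sq: "(a - b)\<^sup>2 \<le> 2 * a\<^sup>2 + 2 * b\<^sup>2" for a b :: real
  proof -
    have "0 \<le> (a + b)\<^sup>2" by simp
    then show ?thesis by (simp add: power2_eq_square algebra_simps)
  qed
  show "integrable lborel (\<lambda>h. ((g (x + h) - g x) $ i)\<^sup>2 * \<rho> \<delta> h)"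
  proof (rule Bochner_Integration.integrable_bound[of _ "\<lambda>h. 2 * (\<rho> \<delta> h * (norm (g (x + h)))\<^sup>2) + 2 * (norm (g x))\<^sup>2 * \<rho> \<delta> h"])
    show "integrable lborel (\<lambda>h. 2 * (\<rho> \<delta> h * (norm (g (x + h)))\<^sup>2) + 2 * (norm (g x))\<^sup>2 * \<rho> \<delta> h)" using ir i1 by simp
    show "(\<lambda>h. ((g (x + h) - g x) $ i)\<^sup>2 * \<rho> \<delta> h) \<in> borel_measurable lborel" by measurable
    show "AE h in lborel. norm (((g (x + h) - g x) $ i)\<^sup>2 * \<rho> \<delta> h) \<le> norm (2 * (\<rho> \<delta> h * (norm (g (x + h)))\<^sup>2) + 2 * (norm (g x))\<^sup>2 * \<rho> \<delta> h)"
    proof (rule AE_I2)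
      fix h
      have "((g (x + h) - g x) $ i)\<^sup>2 \<le> 2 * (g (x + h) $ i)\<^sup>2 + 2 * (g x $ i)\<^sup>2" using sq by simp
      also have "\<dots> \<le> 2 * (norm (g (x + h)))\<^sup>2 + 2 * (norm (g x))\<^sup>2"
        using comp_sq_le[of "g (x + h)" i] comp_sq_le[of "g x" i] by linarith
      finally have "((g (x + h) - g x) $ i)\<^sup>2 * \<rho> \<delta> h \<le> (2 * (norm (g (x + h)))\<^sup>2 + 2 * (norm (g x))\<^sup>2) * \<rho> \<delta> h"
        using r0[of h] by (intro mult_right_mono) auto
      then show "norm (((g (x + h) - g x) $ i)\<^sup>2 * \<rho> \<delta> h) \<le> norm (2 * (\<rho> \<delta> h * (norm (g (x + h)))\<^sup>2) + 2 * (norm (g x))\<^sup>2 * \<rho> \<delta> h)"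
        using r0[of h] by (simp add: abs_mult algebra_simps)
    qed
  qed
  show "integrable lborel (\<lambda>h. \<rho> \<delta> h * (norm (g (x + h) - g x))\<^sup>2)"
  proof (rule Bochner_Integration.integrable_bound[of _ "\<lambda>h. 2 * (\<rho> \<delta> h * (norm (g (x + h)))\<^sup>2) + 2 * (norm (g x))\<^sup>2 * \<rho> \<delta> h"])
    show "integrable lborel (\<lambda>h. 2 * (\<rho> \<delta> h * (norm (g (x + h)))\<^sup>2) + 2 * (norm (g x))\<^sup>2 * \<rho> \<delta> h)" using ir i1 by simp
    show "(\<lambda>h. \<rho> \<delta> h * (norm (g (x + h) - g x))\<^sup>2) \<in> borel_measurable lborel" by measurable
    show "AE h in lborel. norm (\<rho> \<delta> h * (norm (g (x + h) - g x))\<^sup>2) \<le> norm (2 * (\<rho> \<delta> h * (norm (g (x + h)))\<^sup>2) + 2 * (norm (g x))\<^sup>2 * \<rho> \<delta> h)"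
    proof (rule AE_I2)
      fix h
      have "(norm (g (x + h) - g x))\<^sup>2 \<le> (norm (g (x + h)) + norm (g x))\<^sup>2"
        using norm_triangle_ineq4[of "g (x + h)" "g x"] by (intro power_mono) auto
      also have "\<dots> \<le> 2 * (norm (g (x + h)))\<^sup>2 + 2 * (norm (g x))\<^sup>2"
        using sq[of "norm (g (x + h))" "- norm (g x)"] by simp
      finally have "\<rho> \<delta> h * (norm (g (x + h) - g x))\<^sup>2 \<le> \<rho> \<delta> h * (2 * (norm (g (x + h)))\<^sup>2 + 2 * (norm (g x))\<^sup>2)"
        using r0[of h] by (intro mult_left_mono) auto
      then show "norm (\<rho> \<delta> h * (norm (g (x + h) - g x))\<^sup>2) \<le> norm (2 * (\<rho> \<delta> h * (norm (g (x + h)))\<^sup>2) + 2 * (norm (g x))\<^sup>2 * \<rho> \<delta> h)"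
        using r0[of h] by (simp add: abs_mult algebra_simps)
    qed
  qed
qed

lemma stepA:
  fixes g :: "real^'n \<Rightarrow> real^'n"
  assumes gm[measurable]: "g \<in> borel_measurable borel" and per: "\<And>y k. g (y + lattice_vec k) = g y"
    and gfin: "(\<integral>\<^sup>+y\<in>torus_cube. ennreal ((norm (g y))\<^sup>2) \<partial>lborel) < \<infinity>"
    and d: "0 < \<delta>" "\<delta> < 1/2"
  shows "(\<Sum>i\<in>UNIV. (g x $ i - Gc \<delta> g i x)\<^sup>2) \<le> (LINT h|lborel. \<rho> \<delta> h * (norm (g (x + h) - g x))\<^sup>2)"
proof -
  note I = int_facts[OF gm per gfin d]
  have r0: "\<And>h. 0 \<le> \<rho> \<delta> h" using \<rho>_nonneg[OF d(1)] .
  have ir: "integrable lborel (\<rho> \<delta>)" and r1: "(LINT h|lborel. \<rho> \<delta> h) = 1" using LINT_\<rho>[OF d(1)] by auto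
  have each: "(g x $ i - Gc \<delta> g i x)\<^sup>2 \<le> (LINT h|lborel. ((g (x + h) - g x) $ i)\<^sup>2 * \<rho> \<delta> h)" for i
  proof -
    have "g x $ i - Gc \<delta> g i x = (LINT h|lborel. g x $ i * \<rho> \<delta> h) - (LINT h|lborel. \<rho> \<delta> h * g (x + h) $ i)"
      using r1 unfolding Gc_def by simp
    also have "\<dots> = (LINT h|lborel. g x $ i * \<rho> \<delta> h - \<rho> \<delta> h * g (x + h) $ i)"
      using ir I(2)[where i=i and x=x] by (intro Bochner_Integration.integral_diff[symmetric]) auto
    also have "\<dots> = (LINT h|lborel. (g x $ i - g (x + h) $ i) * \<rho> \<delta> h)"
      by (simp add: algebra_simps)
    finally have e: "g x $ i - Gc \<delta> g i x = (LINT h|lborel. (g x $ i - g (x + h) $ i) * \<rho> \<delta> h)" .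
    have "(LINT h|lborel. (g x $ i - g (x + h) $ i) * \<rho> \<delta> h)\<^sup>2 \<le> (LINT h|lborel. \<rho> \<delta> h) * (LINT h|lborel. (g x $ i - g (x + h) $ i)\<^sup>2 * \<rho> \<delta> h)"
    proof (rule cs_integral[OF r0 ir])
      have "(\<lambda>h. (g x $ i - g (x + h) $ i)\<^sup>2 * \<rho> \<delta> h) = (\<lambda>h. ((g (x + h) - g x) $ i)\<^sup>2 * \<rho> \<delta> h)"
        by (rule ext) (simp add: power2_commute)
      then show "integrable lborel (\<lambda>h. (g x $ i - g (x + h) $ i)\<^sup>2 * \<rho> \<delta> h)" using I(3)[where i=i] by simp
      show "(\<lambda>h. g x $ i - g (x + h) $ i) \<in> borel_measurable lborel" by measurable
    qed
    also have "(LINT h|lborel. (g x $ i - g (x + h) $ i)\<^sup>2 * \<rho> \<delta> h) = (LINT h|lborel. ((g (x + h) - g x) $ i)\<^sup>2 * \<rho> \<delta> h)"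
      by (simp add: power2_commute)
    finally show ?thesis using e r1 by simp
  qed
  have "(\<Sum>i\<in>UNIV. (g x $ i - Gc \<delta> g i x)\<^sup>2) \<le> (\<Sum>i\<in>UNIV. LINT h|lborel. ((g (x + h) - g x) $ i)\<^sup>2 * \<rho> \<delta> h)"
    by (rule sum_mono) (rule each)
  also have "\<dots> = (LINT h|lborel. (\<Sum>i\<in>UNIV. ((g (x + h) - g x) $ i)\<^sup>2 * \<rho> \<delta> h))"
    by (rule Bochner_Integration.integral_sum[symmetric]) (rule I(3))
  also have "\<dots> = (LINT h|lborel. \<rho> \<delta> h * (norm (g (x + h) - g x))\<^sup>2)"
    by (intro Bochner_Integration.integral_cong refl) (simp add: norm_sq_vec sum_distrib_left sum_distrib_right mult.commute)
  finally show ?thesis .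
qed

end


lemma T_integrable: "integrable lborel (indicator (torus_cube :: (real^'n) set) :: _ \<Rightarrow> real)"
  using torus_cube_fin by (simp add: integrable_indicator_iff)

context moll_setup begin

lemma stepB:
  fixes f :: "real^'n \<Rightarrow> real" and g :: "real^'n \<Rightarrow> real^'n"
  assumes H: "H1_weak_grad f g" and d: "0 < \<delta>" "\<delta> < 1/2"
  shows "ennreal ((Gc \<delta> g i x)\<^sup>2) \<le> ennreal (A i / \<delta>) * (\<integral>\<^sup>+y\<in>torus_cube. ennreal ((f y)\<^sup>2 * \<bar>per (D\<rho> \<delta> i) (y - x)\<bar>) \<partial>lborel)"
proof -
  note F = H1_facts[OF H]
  have fm[measurable]: "f \<in> borel_measurable borel" and gm[measurable]: "g \<in> borel_measurable borel"
    using F(3,4) .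
  have [measurable]: "per (\<rho> \<delta>) \<in> borel_measurable borel" using per_rho_meas[OF d] .
  have [measurable]: "per (D\<rho> \<delta> i) \<in> borel_measurable borel" using per_Drho_meas[OF d] .
  obtain B\<rho> where B\<rho>: "\<And>v. \<bar>\<rho> \<delta> v\<bar> \<le> B\<rho>" using \<rho>_bound by blast
  obtain BD where BD: "\<And>v. \<bar>D\<rho> \<delta> i v\<bar> \<le> BD" using D\<rho>_bound by blast
  have r0: "\<And>h. 0 \<le> \<rho> \<delta> h" using \<rho>_nonneg[OF d(1)] .
  have BD0: "0 \<le> BD" using BD[of 0] by linarith
  have pr0: "\<And>v. 0 \<le> per (\<rho> \<delta>) v" unfolding per_def using r0 .
  have s1: "Gc \<delta> g i x = (LINT y|lborel. g y $ i * \<rho> \<delta> (y - x))"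
  proof -
    have "(LINT y|lborel. g y $ i * \<rho> \<delta> (y - x)) = (LINT h|lborel. g (x + h) $ i * \<rho> \<delta> ((x + h) - x))"
      by (rule integral_translate) measurable
    then show ?thesis unfolding Gc_def by (simp add: mult.commute)
  qed
  have fin: "(\<integral>\<^sup>+y\<in>torus_cube. ennreal (\<bar>g y $ i\<bar> * per (\<rho> \<delta>) (y - x)) \<partial>lborel) < \<infinity>"
  proof -
    have "(\<integral>\<^sup>+y\<in>torus_cube. ennreal (\<bar>g y $ i\<bar> * per (\<rho> \<delta>) (y - x)) \<partial>lborel)
        \<le> (\<integral>\<^sup>+y. ennreal B\<rho> * (indicator torus_cube y + ennreal ((norm (g y))\<^sup>2) * indicator torus_cube y) \<partial>lborel)"
    proof (intro nn_integral_mono)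
      fix y
      have a: "\<bar>g y $ i\<bar> \<le> 1 + (norm (g y))\<^sup>2" by (rule comp_le_sq)
      have b: "per (\<rho> \<delta>) (y - x) \<le> B\<rho>" using per_bound[of "\<rho> \<delta>" B\<rho>, OF B\<rho>] by (simp add: abs_le_iff)
      have "\<bar>g y $ i\<bar> * per (\<rho> \<delta>) (y - x) \<le> (1 + (norm (g y))\<^sup>2) * B\<rho>"
        using a b pr0 by (intro mult_mono) auto
      then have le: "ennreal (\<bar>g y $ i\<bar> * per (\<rho> \<delta>) (y - x)) \<le> ennreal ((1 + (norm (g y))\<^sup>2) * B\<rho>)"
        by (rule ennreal_leI)
      have B0: "0 \<le> B\<rho>" using B\<rho>[of 0] by linarith
      have "ennreal ((1 + (norm (g y))\<^sup>2) * B\<rho>) = ennreal (1 + (norm (g y))\<^sup>2) * ennreal B\<rho>"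
        using B0 by (intro ennreal_mult) auto
      also have "ennreal (1 + (norm (g y))\<^sup>2) = 1 + ennreal ((norm (g y))\<^sup>2)"
        using ennreal_plus[of 1 "(norm (g y))\<^sup>2"] by simp
      finally have "ennreal (\<bar>g y $ i\<bar> * per (\<rho> \<delta>) (y - x)) \<le> ennreal B\<rho> * (1 + ennreal ((norm (g y))\<^sup>2))"
        using le by (simp add: mult.commute)
      then show "ennreal (\<bar>g y $ i\<bar> * per (\<rho> \<delta>) (y - x)) * indicator torus_cube y \<le> ennreal B\<rho> * (indicator torus_cube y + ennreal ((norm (g y))\<^sup>2) * indicator torus_cube y)"
        by (cases "y \<in> torus_cube") auto
    qed
    also have "\<dots> = ennreal B\<rho> * (\<integral>\<^sup>+y. indicator torus_cube y + ennreal ((norm (g y))\<^sup>2) * indicator torus_cube y \<partial>lborel)"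
      by (rule nn_integral_cmult) measurable
    also have "(\<integral>\<^sup>+y. indicator torus_cube y + ennreal ((norm (g y))\<^sup>2) * indicator torus_cube y \<partial>lborel)
        = (\<integral>\<^sup>+y. indicator torus_cube (y::real^'n) \<partial>lborel) + (\<integral>\<^sup>+y. ennreal ((norm (g y))\<^sup>2) * indicator torus_cube y \<partial>lborel)"
      by (rule nn_integral_add) measurable
    also have "(\<integral>\<^sup>+y. indicator torus_cube (y::real^'n) \<partial>lborel) = emeasure lborel (torus_cube :: (real^'n) set)"
      by simp
    also have "ennreal B\<rho> * (emeasure lborel (torus_cube :: (real^'n) set) + (\<integral>\<^sup>+y. ennreal ((norm (g y))\<^sup>2) * indicator torus_cube y \<partial>lborel)) < \<infinity>"
    proof -
      have t: "emeasure lborel (torus_cube :: (real^'n) set) < \<infinity>" by (rule torus_cube_fin)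
      have "emeasure lborel (torus_cube :: (real^'n) set) + (\<integral>\<^sup>+y. ennreal ((norm (g y))\<^sup>2) * indicator torus_cube y \<partial>lborel) < \<infinity>"
        using t F(6) by simp
      then show ?thesis by (simp add: ennreal_mult_less_top)
    qed
    finally show ?thesis .
  qed
  have s2: "(LINT y|lborel. g y $ i * \<rho> \<delta> (y - x)) = (LINT y:torus_cube|lborel. g y $ i * per (\<rho> \<delta>) (y - x))"
    by (rule periodize_real(3)) (use F(2) r0 pr0 per_rho_sum[OF d] fin in auto)
  define \<phi> where "\<phi> = (\<lambda>y. 1 * per (\<rho> \<delta>) (1 *\<^sub>R y + - x))"
  define D where "D = (\<lambda>y. (1 * 1) * per (D\<rho> \<delta> i) (1 *\<^sub>R y + - x))"
  have "smooth \<phi>" unfolding \<phi>_def by (rule smooth_affine[OF per_rho_smooth[OF d]])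
  moreover have "periodic \<phi>" unfolding periodic_def \<phi>_def
  proof (intro allI)
    fix y :: "real^'n" and k
    have "1 *\<^sub>R (y + lattice_vec k) + - x = (1 *\<^sub>R y + - x) + lattice_vec k" by simp
    then show "1 * per (\<rho> \<delta>) (1 *\<^sub>R (y + lattice_vec k) + - x) = 1 * per (\<rho> \<delta>) (1 *\<^sub>R y + - x)"
      by (simp only: per_periodic)
  qed
  moreover have "has_partial \<phi> i D" unfolding \<phi>_def D_def by (rule has_partial_affine[OF per_rho_partial[OF d]])
  ultimately have "(LINT y:torus_cube|lborel. f y * D y) = - (LINT y:torus_cube|lborel. g y $ i * \<phi> y)"
    by (rule F(8))
  then have s3: "Gc \<delta> g i x = - (LINT y:torus_cube|lborel. f y * per (D\<rho> \<delta> i) (y - x))"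
    using s1 s2 unfolding \<phi>_def D_def by simp
  define u where "u y = indicator torus_cube y * per (D\<rho> \<delta> i) (y - x)" for y
  have [measurable]: "u \<in> borel_measurable borel" unfolding u_def by measurable
  have ub: "\<bar>u y\<bar> \<le> BD * indicator torus_cube y" for y
    using per_bound[of "D\<rho> \<delta> i" BD "y - x", OF BD] unfolding u_def by (auto simp: indicator_def)
  have iu: "integrable lborel u"
  proof (rule Bochner_Integration.integrable_bound[of _ "\<lambda>y::real^'n. BD * indicator torus_cube y"])
    show "integrable lborel (\<lambda>y::real^'n. BD * indicator torus_cube y)" using T_integrable[where 'n='n] by simp
    show "u \<in> borel_measurable lborel" by measurable
    show "AE y in lborel. norm (u y) \<le> norm (BD * indicator torus_cube (y::real^'n))"
    proof (rule AE_I2)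
      fix y
      have "\<bar>u y\<bar> \<le> \<bar>BD * indicator torus_cube y\<bar>" using ub[of y] by linarith
      then show "norm (u y) \<le> norm (BD * indicator torus_cube y)" by simp
    qed
  qed
  have if2: "integrable lborel (\<lambda>y. (f y)\<^sup>2 * \<bar>u y\<bar>)"
  proof (rule Bochner_Integration.integrable_bound[of _ "\<lambda>y. BD * (indicator torus_cube y *\<^sub>R (f y)\<^sup>2)"])
    show "integrable lborel (\<lambda>y. BD * (indicator torus_cube y *\<^sub>R (f y)\<^sup>2))"
      using F(7) unfolding set_integrable_def by simp
    show "(\<lambda>y. (f y)\<^sup>2 * \<bar>u y\<bar>) \<in> borel_measurable lborel" by measurable
    show "AE y in lborel. norm ((f y)\<^sup>2 * \<bar>u y\<bar>) \<le> norm (BD * (indicator torus_cube y *\<^sub>R (f y)\<^sup>2))"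
    proof (rule AE_I2)
      fix y
      have "(f y)\<^sup>2 * \<bar>u y\<bar> \<le> (f y)\<^sup>2 * (BD * indicator torus_cube y)" by (intro mult_left_mono ub) auto
      then show "norm ((f y)\<^sup>2 * \<bar>u y\<bar>) \<le> norm (BD * (indicator torus_cube y *\<^sub>R (f y)\<^sup>2))"
        using BD0 by (simp add: abs_mult mult_ac)
    qed
  qed
  have cs: "(LINT y|lborel. f y * u y)\<^sup>2 \<le> (LINT y|lborel. \<bar>u y\<bar>) * (LINT y|lborel. (f y)\<^sup>2 * \<bar>u y\<bar>)"
    by (rule cs_integral2[OF iu if2]) measurable
  have e4: "(Gc \<delta> g i x)\<^sup>2 = (LINT y|lborel. f y * u y)\<^sup>2"
  proof -
    have "(LINT y:torus_cube|lborel. f y * per (D\<rho> \<delta> i) (y - x)) = (LINT y|lborel. f y * u y)"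
      unfolding set_lebesgue_integral_def u_def by (simp add: mult_ac)
    then show ?thesis using s3 by simp
  qed
  have e5: "(LINT y|lborel. \<bar>u y\<bar>) = A i / \<delta>"
  proof -
    have "ennreal (LINT y|lborel. \<bar>u y\<bar>) = (\<integral>\<^sup>+y. ennreal \<bar>u y\<bar> \<partial>lborel)"
      by (rule nn_integral_eq_integral[symmetric]) (use iu in auto)
    also have "\<dots> = (\<integral>\<^sup>+y\<in>torus_cube. 1 * ennreal \<bar>per (D\<rho> \<delta> i) (y - x)\<bar> \<partial>lborel)"
      unfolding u_def by (intro nn_integral_cong) (auto simp: indicator_def abs_mult)
    also have "\<dots> = (\<integral>\<^sup>+y. 1 * ennreal \<bar>D\<rho> \<delta> i (y - x)\<bar> \<partial>lborel)"
      by (rule periodize[symmetric]) (use per_Drho_sum[OF d] in auto)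
    also have "\<dots> = (\<integral>\<^sup>+h. 1 * ennreal \<bar>D\<rho> \<delta> i ((x + h) - x)\<bar> \<partial>lborel)"
      by (rule nn_integral_translate) measurable
    also have "\<dots> = ennreal (A i / \<delta>)" using nn_D\<rho>[OF d(1)] by simp
    finally show ?thesis using A_nonneg[of i] d by (subst (asm) ennreal_inj) auto
  qed
  have e6: "ennreal (LINT y|lborel. (f y)\<^sup>2 * \<bar>u y\<bar>) = (\<integral>\<^sup>+y\<in>torus_cube. ennreal ((f y)\<^sup>2 * \<bar>per (D\<rho> \<delta> i) (y - x)\<bar>) \<partial>lborel)"
  proof -
    have "ennreal (LINT y|lborel. (f y)\<^sup>2 * \<bar>u y\<bar>) = (\<integral>\<^sup>+y. ennreal ((f y)\<^sup>2 * \<bar>u y\<bar>) \<partial>lborel)"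
      by (rule nn_integral_eq_integral[symmetric]) (use if2 in auto)
    also have "\<dots> = (\<integral>\<^sup>+y\<in>torus_cube. ennreal ((f y)\<^sup>2 * \<bar>per (D\<rho> \<delta> i) (y - x)\<bar>) \<partial>lborel)"
      unfolding u_def by (intro nn_integral_cong) (auto simp: indicator_def abs_mult)
    finally show ?thesis .
  qed
  have "(Gc \<delta> g i x)\<^sup>2 \<le> A i / \<delta> * (LINT y|lborel. (f y)\<^sup>2 * \<bar>u y\<bar>)"
    using cs e4 e5 by simp
  then have "ennreal ((Gc \<delta> g i x)\<^sup>2) \<le> ennreal (A i / \<delta> * (LINT y|lborel. (f y)\<^sup>2 * \<bar>u y\<bar>))"
    by (rule ennreal_leI)
  also have "\<dots> = ennreal (A i / \<delta>) * ennreal (LINT y|lborel. (f y)\<^sup>2 * \<bar>u y\<bar>)"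
    using A_nonneg[of i] d by (intro ennreal_mult) auto
  finally show ?thesis using e6 by simp
qed

end


context moll_setup begin

lemma pointwise:
  fixes f :: "real^'n \<Rightarrow> real" and g :: "real^'n \<Rightarrow> real^'n"
  assumes H: "H1_weak_grad f g" and d: "0 < \<delta>" "\<delta> < 1/2"
  shows "ennreal ((norm (g x))\<^sup>2) \<le> 2 * (\<integral>\<^sup>+h. ennreal (\<rho> \<delta> h * (norm (g (x + h) - g x))\<^sup>2) \<partial>lborel)
     + 2 * (\<Sum>i\<in>UNIV. ennreal (A i / \<delta>) * (\<integral>\<^sup>+y\<in>torus_cube. ennreal ((f y)\<^sup>2 * \<bar>per (D\<rho> \<delta> i) (y - x)\<bar>) \<partial>lborel))"
proof -
  note F = H1_facts[OF H]
  define L where "L = (LINT h|lborel. \<rho> \<delta> h * (norm (g (x + h) - g x))\<^sup>2)"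
  define S where "S = (\<Sum>i\<in>UNIV. (Gc \<delta> g i x)\<^sup>2)"
  have L0: "0 \<le> L" unfolding L_def using \<rho>_nonneg[OF d(1)] by (intro integral_nonneg_AE) auto
  have S0: "0 \<le> S" unfolding S_def by (intro sum_nonneg) auto
  have sq: "a\<^sup>2 \<le> 2 * (a - b)\<^sup>2 + 2 * b\<^sup>2" for a b :: real
  proof -
    have "0 \<le> (a - 2 * b)\<^sup>2" by simp
    then show ?thesis by (simp add: power2_eq_square algebra_simps)
  qed
  have "(norm (g x))\<^sup>2 = (\<Sum>i\<in>UNIV. (g x $ i)\<^sup>2)" by (rule norm_sq_vec)
  also have "\<dots> \<le> (\<Sum>i\<in>UNIV. 2 * (g x $ i - Gc \<delta> g i x)\<^sup>2 + 2 * (Gc \<delta> g i x)\<^sup>2)"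
    by (intro sum_mono sq)
  also have "\<dots> = 2 * (\<Sum>i\<in>UNIV. (g x $ i - Gc \<delta> g i x)\<^sup>2) + 2 * S"
    unfolding S_def by (simp add: sum.distrib sum_distrib_left)
  also have "\<dots> \<le> 2 * L + 2 * S"
    using stepA[OF F(4) F(2) F(6) d, of x] unfolding L_def by simp
  finally have r: "(norm (g x))\<^sup>2 \<le> 2 * L + 2 * S" .
  have "ennreal ((norm (g x))\<^sup>2) \<le> ennreal (2 * L + 2 * S)" using r by (rule ennreal_leI)
  also have "\<dots> = 2 * ennreal L + 2 * (\<Sum>i\<in>UNIV. ennreal ((Gc \<delta> g i x)\<^sup>2))"
    using L0 S0 unfolding S_def by (simp add: ennreal_plus ennreal_mult sum_nonneg)
  also have "ennreal L = (\<integral>\<^sup>+h. ennreal (\<rho> \<delta> h * (norm (g (x + h) - g x))\<^sup>2) \<partial>lborel)"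
    unfolding L_def
    by (rule nn_integral_eq_integral[symmetric]) (use int_facts(4)[OF F(4) F(2) F(6) d, of x] \<rho>_nonneg[OF d(1)] in auto)
  also have "(\<Sum>i\<in>UNIV. ennreal ((Gc \<delta> g i x)\<^sup>2)) \<le> (\<Sum>i\<in>UNIV. ennreal (A i / \<delta>) * (\<integral>\<^sup>+y\<in>torus_cube. ennreal ((f y)\<^sup>2 * \<bar>per (D\<rho> \<delta> i) (y - x)\<bar>) \<partial>lborel))"
    by (intro sum_mono stepB[OF H d])
  finally show ?thesis by (simp add: add_left_mono mult_left_mono)
qed

lemma TJ:
  fixes g :: "real^'n \<Rightarrow> real^'n"
  assumes gm[measurable]: "g \<in> borel_measurable borel" and d: "0 < \<delta>"
  shows "(\<integral>\<^sup>+x\<in>torus_cube. (\<integral>\<^sup>+h. ennreal (\<rho> \<delta> h * (norm (g (x + h) - g x))\<^sup>2) \<partial>lborel) \<partial>lborel)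
       = (\<integral>\<^sup>+h. ennreal (\<rho> \<delta> h) * Dg g h \<partial>lborel)"
proof -
  have "(\<integral>\<^sup>+x\<in>torus_cube. (\<integral>\<^sup>+h. ennreal (\<rho> \<delta> h * (norm (g (x + h) - g x))\<^sup>2) \<partial>lborel) \<partial>lborel)
      = (\<integral>\<^sup>+x. (\<integral>\<^sup>+h. ennreal (\<rho> \<delta> h * (norm (g (x + h) - g x))\<^sup>2) * indicator torus_cube x \<partial>lborel) \<partial>lborel)"
    by (intro nn_integral_cong nn_integral_multc[symmetric]) measurable
  also have "\<dots> = (\<integral>\<^sup>+h. (\<integral>\<^sup>+x. ennreal (\<rho> \<delta> h * (norm (g (x + h) - g x))\<^sup>2) * indicator torus_cube x \<partial>lborel) \<partial>lborel)"
    by (rule lborel_pair.Fubini'[symmetric]) measurable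
  also have "\<dots> = (\<integral>\<^sup>+h. ennreal (\<rho> \<delta> h) * Dg g h \<partial>lborel)"
  proof (intro nn_integral_cong)
    fix h
    have "(\<integral>\<^sup>+x. ennreal (\<rho> \<delta> h * (norm (g (x + h) - g x))\<^sup>2) * indicator torus_cube x \<partial>lborel)
        = (\<integral>\<^sup>+x. ennreal (\<rho> \<delta> h) * (ennreal ((norm (g (x + h) - g x))\<^sup>2) * indicator torus_cube x) \<partial>lborel)"
      by (intro nn_integral_cong) (simp add: ennreal_mult \<rho>_nonneg[OF d] mult.assoc)
    also have "\<dots> = ennreal (\<rho> \<delta> h) * Dg g h"
      unfolding Dg_def by (rule nn_integral_cmult) measurable
    finally show "(\<integral>\<^sup>+x. ennreal (\<rho> \<delta> h * (norm (g (x + h) - g x))\<^sup>2) * indicator torus_cube x \<partial>lborel) = ennreal (\<rho> \<delta> h) * Dg g h" .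
  qed
  finally show ?thesis .
qed

lemma TF:
  fixes f :: "real^'n \<Rightarrow> real"
  assumes fm[measurable]: "f \<in> borel_measurable borel" and d: "0 < \<delta>" "\<delta> < 1/2"
  shows "(\<integral>\<^sup>+x\<in>torus_cube. (\<integral>\<^sup>+y\<in>torus_cube. ennreal ((f y)\<^sup>2 * \<bar>per (D\<rho> \<delta> i) (y - x)\<bar>) \<partial>lborel) \<partial>lborel)
       = ennreal (A i / \<delta>) * (\<integral>\<^sup>+y\<in>torus_cube. ennreal ((f y)\<^sup>2) \<partial>lborel)"
proof -
  have [measurable]: "per (D\<rho> \<delta> i) \<in> borel_measurable borel" using per_Drho_meas[OF d] .
  have inner: "(\<integral>\<^sup>+x. ennreal \<bar>per (D\<rho> \<delta> i) (y - x)\<bar> * indicator torus_cube x \<partial>lborel) = ennreal (A i / \<delta>)" for y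
  proof -
    have "(\<integral>\<^sup>+x. ennreal \<bar>D\<rho> \<delta> i (y - x)\<bar> \<partial>lborel) = (\<integral>\<^sup>+x\<in>torus_cube. ennreal \<bar>per (D\<rho> \<delta> i) (y - x)\<bar> \<partial>lborel)"
      by (rule periodize_x) (use per_Drho_sum_minus[OF d] in auto)
    moreover have "(\<integral>\<^sup>+v. ennreal \<bar>D\<rho> \<delta> i v\<bar> \<partial>lborel) = ennreal (\<bar>-1\<bar> ^ CARD('n)) * (\<integral>\<^sup>+x. ennreal \<bar>D\<rho> \<delta> i (y + (-1) *\<^sub>R x)\<bar> \<partial>lborel)"
      by (rule nn_integral_affine) auto
    ultimately show ?thesis using nn_D\<rho>[OF d(1)] by simp
  qed
  have "(\<integral>\<^sup>+x\<in>torus_cube. (\<integral>\<^sup>+y\<in>torus_cube. ennreal ((f y)\<^sup>2 * \<bar>per (D\<rho> \<delta> i) (y - x)\<bar>) \<partial>lborel) \<partial>lborel)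
      = (\<integral>\<^sup>+x. (\<integral>\<^sup>+y. ennreal ((f y)\<^sup>2 * \<bar>per (D\<rho> \<delta> i) (y - x)\<bar>) * indicator torus_cube y * indicator torus_cube x \<partial>lborel) \<partial>lborel)"
    by (intro nn_integral_cong nn_integral_multc[symmetric]) measurable
  also have "\<dots> = (\<integral>\<^sup>+y. (\<integral>\<^sup>+x. ennreal ((f y)\<^sup>2 * \<bar>per (D\<rho> \<delta> i) (y - x)\<bar>) * indicator torus_cube y * indicator torus_cube x \<partial>lborel) \<partial>lborel)"
    by (rule lborel_pair.Fubini'[symmetric]) measurable
  also have "\<dots> = (\<integral>\<^sup>+y. ennreal ((f y)\<^sup>2) * indicator torus_cube y * ennreal (A i / \<delta>) \<partial>lborel)"
  proof (intro nn_integral_cong)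
    fix y
    have "(\<integral>\<^sup>+x. ennreal ((f y)\<^sup>2 * \<bar>per (D\<rho> \<delta> i) (y - x)\<bar>) * indicator torus_cube y * indicator torus_cube x \<partial>lborel)
        = (\<integral>\<^sup>+x. (ennreal ((f y)\<^sup>2) * indicator torus_cube y) * (ennreal \<bar>per (D\<rho> \<delta> i) (y - x)\<bar> * indicator torus_cube x) \<partial>lborel)"
      by (intro nn_integral_cong) (simp add: ennreal_mult mult_ac)
    also have "\<dots> = (ennreal ((f y)\<^sup>2) * indicator torus_cube y) * (\<integral>\<^sup>+x. ennreal \<bar>per (D\<rho> \<delta> i) (y - x)\<bar> * indicator torus_cube x \<partial>lborel)"
      by (rule nn_integral_cmult) measurable
    finally show "(\<integral>\<^sup>+x. ennreal ((f y)\<^sup>2 * \<bar>per (D\<rho> \<delta> i) (y - x)\<bar>) * indicator torus_cube y * indicator torus_cube x \<partial>lborel)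
       = ennreal ((f y)\<^sup>2) * indicator torus_cube y * ennreal (A i / \<delta>)" by (simp only: inner)
  qed
  also have "\<dots> = ennreal (A i / \<delta>) * (\<integral>\<^sup>+y\<in>torus_cube. ennreal ((f y)\<^sup>2) \<partial>lborel)"
    by (subst nn_integral_cmult[symmetric]) (measurable, simp add: mult_ac)
  finally show ?thesis .
qed

lemma gbound:
  fixes f :: "real^'n \<Rightarrow> real" and g :: "real^'n \<Rightarrow> real^'n"
  assumes H: "H1_weak_grad f g" and d: "0 < \<delta>" "\<delta> < 1/2"
  shows "(\<integral>\<^sup>+x\<in>torus_cube. ennreal ((norm (g x))\<^sup>2) \<partial>lborel)
     \<le> 2 * (\<integral>\<^sup>+h. ennreal (\<rho> \<delta> h) * Dg g h \<partial>lborel)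
       + 2 * (\<Sum>i\<in>UNIV. ennreal (A i / \<delta>) * (ennreal (A i / \<delta>) * (\<integral>\<^sup>+y\<in>torus_cube. ennreal ((f y)\<^sup>2) \<partial>lborel)))"
proof -
  note F = H1_facts[OF H]
  have fm[measurable]: "f \<in> borel_measurable borel" and gm[measurable]: "g \<in> borel_measurable borel"
    using F(3,4) .
  have [measurable]: "per (D\<rho> \<delta> i) \<in> borel_measurable borel" for i using per_Drho_meas[OF d] .
  define J where "J x = (\<integral>\<^sup>+h. ennreal (\<rho> \<delta> h * (norm (g (x + h) - g x))\<^sup>2) \<partial>lborel)" for x
  define Fi where "Fi i x = (\<integral>\<^sup>+y\<in>torus_cube. ennreal ((f y)\<^sup>2 * \<bar>per (D\<rho> \<delta> i) (y - x)\<bar>) \<partial>lborel)" for i x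
  have Jm[measurable]: "J \<in> borel_measurable borel" unfolding J_def by measurable
  have Fm[measurable]: "Fi i \<in> borel_measurable borel" for i unfolding Fi_def by measurable
  have "(\<integral>\<^sup>+x\<in>torus_cube. ennreal ((norm (g x))\<^sup>2) \<partial>lborel)
      \<le> (\<integral>\<^sup>+x. (2 * J x + 2 * (\<Sum>i\<in>UNIV. ennreal (A i / \<delta>) * Fi i x)) * indicator torus_cube x \<partial>lborel)"
    by (intro nn_integral_mono mult_right_mono) (auto simp: J_def Fi_def intro: pointwise[OF H d])
  also have "\<dots> = (\<integral>\<^sup>+x. 2 * (J x * indicator torus_cube x) + 2 * (\<Sum>i\<in>UNIV. ennreal (A i / \<delta>) * (Fi i x * indicator torus_cube x)) \<partial>lborel)"
    by (intro nn_integral_cong) (simp add: distrib_left distrib_right sum_distrib_left sum_distrib_right mult_ac)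
  also have "\<dots> = (\<integral>\<^sup>+x. 2 * (J x * indicator torus_cube x) \<partial>lborel) + (\<integral>\<^sup>+x. 2 * (\<Sum>i\<in>UNIV. ennreal (A i / \<delta>) * (Fi i x * indicator torus_cube x)) \<partial>lborel)"
    by (rule nn_integral_add) measurable
  also have "(\<integral>\<^sup>+x. 2 * (J x * indicator torus_cube x) \<partial>lborel) = 2 * (\<integral>\<^sup>+x\<in>torus_cube. J x \<partial>lborel)"
    by (rule nn_integral_cmult) measurable
  also have "(\<integral>\<^sup>+x. 2 * (\<Sum>i\<in>UNIV. ennreal (A i / \<delta>) * (Fi i x * indicator torus_cube x)) \<partial>lborel)
      = 2 * (\<integral>\<^sup>+x. (\<Sum>i\<in>UNIV. ennreal (A i / \<delta>) * (Fi i x * indicator torus_cube x)) \<partial>lborel)"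
    by (rule nn_integral_cmult) measurable
  also have "(\<integral>\<^sup>+x. (\<Sum>i\<in>UNIV. ennreal (A i / \<delta>) * (Fi i x * indicator torus_cube x)) \<partial>lborel)
      = (\<Sum>i\<in>UNIV. \<integral>\<^sup>+x. ennreal (A i / \<delta>) * (Fi i x * indicator torus_cube x) \<partial>lborel)"
    by (rule nn_integral_sum) measurable
  also have "(\<Sum>i\<in>UNIV. \<integral>\<^sup>+x. ennreal (A i / \<delta>) * (Fi i x * indicator torus_cube x) \<partial>lborel)
      = (\<Sum>i\<in>UNIV. ennreal (A i / \<delta>) * (\<integral>\<^sup>+x\<in>torus_cube. Fi i x \<partial>lborel))"
    by (intro sum.cong refl nn_integral_cmult) measurable
  also have "(\<integral>\<^sup>+x\<in>torus_cube. J x \<partial>lborel) = (\<integral>\<^sup>+h. ennreal (\<rho> \<delta> h) * Dg g h \<partial>lborel)"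
    unfolding J_def by (rule TJ[OF gm d(1)])
  also have "(\<lambda>i. ennreal (A i / \<delta>) * (\<integral>\<^sup>+x\<in>torus_cube. Fi i x \<partial>lborel))
      = (\<lambda>i. ennreal (A i / \<delta>) * (ennreal (A i / \<delta>) * (\<integral>\<^sup>+y\<in>torus_cube. ennreal ((f y)\<^sup>2) \<partial>lborel)))"
    unfolding Fi_def by (intro ext arg_cong2[where f="(*)"] refl TF[OF fm d])
  finally show ?thesis .
qed

end


lemma set_nn_eq:
  fixes F :: "real^'n \<Rightarrow> real"
  assumes "set_integrable lborel torus_cube F" "\<And>x. 0 \<le> F x"
  shows "ennreal (LINT x:torus_cube|lborel. F x) = (\<integral>\<^sup>+x\<in>torus_cube. ennreal (F x) \<partial>lborel)"
proof -
  have "ennreal (LINT x:torus_cube|lborel. F x) = (\<integral>\<^sup>+x. ennreal (indicator torus_cube x *\<^sub>R F x) \<partial>lborel)"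
    unfolding set_lebesgue_integral_def
    by (rule nn_integral_eq_integral[symmetric]) (use assms in \<open>auto simp: set_integrable_def\<close>)
  also have "\<dots> = (\<integral>\<^sup>+x\<in>torus_cube. ennreal (F x) \<partial>lborel)"
    by (intro nn_integral_cong) (simp add: indicator_def)
  finally show ?thesis .
qed

lemma set_int_nonneg:
  fixes F :: "real^'n \<Rightarrow> real"
  assumes "\<And>x. 0 \<le> F x"
  shows "0 \<le> (LINT x:torus_cube|lborel. F x)"
  unfolding set_lebesgue_integral_def using assms by (intro integral_nonneg_AE) (auto simp: indicator_def)

theorem lemmaC3:
  fixes \<omega> :: "real \<Rightarrow> real" and \<gamma> :: real
  assumes smooth_\<omega>: "smooth (\<lambda>x::real^'n. \<omega> (norm x))"
    and nonneg_\<omega>: "\<forall>x::real^'n. 0 \<le> \<omega> (norm x)"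
    and supp_\<omega>: "\<forall>x::real^'n. norm x > 1 \<longrightarrow> \<omega> (norm x) = 0"
    and int_\<omega>: "integrable lborel (\<lambda>x::real^'n. \<omega> (norm x))"
    and int1_\<omega>: "integral\<^sup>L lborel (\<lambda>x::real^'n. \<omega> (norm x)) = 1"
    and \<gamma>: "0 < \<gamma>" "\<gamma> < 1"
  shows "\<exists>\<epsilon>0 > 0. \<exists>C \<ge> 0. \<forall>\<epsilon>. 0 < \<epsilon> \<and> \<epsilon> < \<epsilon>0 \<longrightarrow>
     (\<forall>(f :: real^'n \<Rightarrow> real) g. H1_weak_grad f g \<longrightarrow>
        ennreal (H1_sq f g)
          \<le> ennreal \<gamma> * (\<integral>\<^sup>+ x\<in>torus_cube. (\<integral>\<^sup>+ y\<in>torus_cube.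
                 ennreal ((norm (g x - g y))\<^sup>2 / \<epsilon>\<^sup>2 * moll \<omega> \<epsilon> CARD('n) (tdist x y)) \<partial>lborel) \<partial>lborel)
            + ennreal (C * L2_sq f))"
proof -
  define \<Omega> where "\<Omega> = (\<lambda>x::real^'n. \<omega> (norm x))"
  interpret M: moll_setup \<Omega>
    by unfold_locales (use smooth_\<omega> nonneg_\<omega> supp_\<omega> int1_\<omega> in \<open>auto simp: \<Omega>_def\<close>)
  define \<delta>0 where "\<delta>0 = min (1/8) (sqrt (\<gamma>/2) / 2)"
  have d0: "0 < \<delta>0" "\<delta>0 \<le> 1/8" using \<gamma> by (auto simp: \<delta>0_def)
  have d0g: "8 * \<delta>0\<^sup>2 \<le> \<gamma>"
  proof -
    have "\<delta>0 \<le> sqrt (\<gamma>/2) / 2" unfolding \<delta>0_def by simp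
    then have "\<delta>0\<^sup>2 \<le> (sqrt (\<gamma>/2) / 2)\<^sup>2" using d0 by (intro power_mono) auto
    also have "\<dots> = \<gamma> / 8" using \<gamma> by (simp add: power_divide)
    finally show ?thesis by simp
  qed
  define C where "C = 1 + 2 * (\<Sum>i\<in>UNIV. (M.A i / \<delta>0)\<^sup>2)"
  have C0: "0 \<le> C" unfolding C_def by (simp add: sum_nonneg add_nonneg_nonneg)
  have main: "ennreal (H1_sq f g)
          \<le> ennreal \<gamma> * (\<integral>\<^sup>+ x\<in>torus_cube. (\<integral>\<^sup>+ y\<in>torus_cube.
                 ennreal ((norm (g x - g y))\<^sup>2 / \<epsilon>\<^sup>2 * moll \<omega> \<epsilon> CARD('n) (tdist x y)) \<partial>lborel) \<partial>lborel)
            + ennreal (C * L2_sq f)"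
    if e: "0 < \<epsilon>" "\<epsilon> < \<delta>0" and H: "H1_weak_grad f g" for \<epsilon> and f :: "real^'n \<Rightarrow> real" and g
  proof -
    note F = H1_facts[OF H]
    have fm[measurable]: "f \<in> borel_measurable borel" and gm[measurable]: "g \<in> borel_measurable borel"
      using F(3,4) .
    define a where "a = \<delta>0 / \<epsilon>"
    have a0: "0 < a" unfolding a_def using d0 e by simp
    define m where "m = nat \<lceil>a\<rceil>"
    have mr: "real m = of_int \<lceil>a\<rceil>" unfolding m_def using a0 by simp
    have ma: "a \<le> real m" "real m < a + 1" unfolding mr using ceiling_correct[of a] by linarith+
    have m1: "1 \<le> m" using ma(1) a0 by linarith
    define \<delta> where "\<delta> = real m * \<epsilon>"
    have dlow: "\<delta>0 \<le> \<delta>" using ma(1) e unfolding \<delta>_def a_def by (simp add: field_simps)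
    have dup: "\<delta> < 2 * \<delta>0"
    proof -
      have "\<delta> < (a + 1) * \<epsilon>" unfolding \<delta>_def using ma(2) e by (intro mult_strict_right_mono) auto
      also have "\<dots> = \<delta>0 + \<epsilon>" unfolding a_def using e by (simp add: field_simps)
      finally show ?thesis using e by simp
    qed
    have dd: "0 < \<delta>" "\<delta> < 1/2" using dlow dup d0 by auto
    have e2: "0 < \<epsilon>" "\<epsilon> < 1/2" using e d0 by auto
    define l where "l = L2_sq f"
    have l0: "0 \<le> l" unfolding l_def L2_sq_def by (rule set_int_nonneg) simp
    have Lf: "ennreal l = (\<integral>\<^sup>+y\<in>torus_cube. ennreal ((f y)\<^sup>2) \<partial>lborel)"
      unfolding l_def L2_sq_def by (rule set_nn_eq[OF F(7)]) simp
    have gsi: "set_integrable lborel torus_cube (\<lambda>x. (norm (g x))\<^sup>2)"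
      using H unfolding H1_weak_grad_def by blast
    have Lg: "ennreal (LINT x:torus_cube|lborel. (norm (g x))\<^sup>2) = (\<integral>\<^sup>+x\<in>torus_cube. ennreal ((norm (g x))\<^sup>2) \<partial>lborel)"
      by (rule set_nn_eq[OF gsi]) simp
    have H1e: "ennreal (H1_sq f g) = ennreal l + (\<integral>\<^sup>+x\<in>torus_cube. ennreal ((norm (g x))\<^sup>2) \<partial>lborel)"
      unfolding H1_sq_def l_def[symmetric] Lg[symmetric]
      using l0 set_int_nonneg[of "\<lambda>x. (norm (g x))\<^sup>2"] by (simp add: ennreal_plus)
    define N where "N = (\<integral>\<^sup>+h. ennreal (M.\<rho> \<epsilon> h) * Dg g h \<partial>lborel)"
    have MM: "moll \<omega> \<epsilon> CARD('n) (norm h) = M.\<rho> \<epsilon> h" for h :: "real^'n"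
      unfolding moll_def M.\<rho>_def using e by (simp add: \<Omega>_def)
    have NLI: "(\<integral>\<^sup>+ x\<in>torus_cube. (\<integral>\<^sup>+ y\<in>torus_cube.
                 ennreal ((norm (g x - g y))\<^sup>2 / \<epsilon>\<^sup>2 * moll \<omega> \<epsilon> CARD('n) (tdist x y)) \<partial>lborel) \<partial>lborel)
          = ennreal (1 / \<epsilon>\<^sup>2) * N"
    proof -
      have "(\<integral>\<^sup>+ x\<in>torus_cube. (\<integral>\<^sup>+ y\<in>torus_cube.
                 ennreal ((norm (g x - g y))\<^sup>2 / \<epsilon>\<^sup>2 * moll \<omega> \<epsilon> CARD('n) (tdist x y)) \<partial>lborel) \<partial>lborel)
          = (\<integral>\<^sup>+ x. ennreal (1 / \<epsilon>\<^sup>2) * ((\<integral>\<^sup>+h. ennreal (M.\<rho> \<epsilon> h * (norm (g (x + h) - g x))\<^sup>2) \<partial>lborel) * indicator torus_cube x) \<partial>lborel)"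
      proof (intro nn_integral_cong)
        fix x
        have "(\<integral>\<^sup>+ y\<in>torus_cube. ennreal ((norm (g x - g y))\<^sup>2 / \<epsilon>\<^sup>2 * moll \<omega> \<epsilon> CARD('n) (tdist x y)) \<partial>lborel)
            = (\<integral>\<^sup>+h. ennreal (M.\<rho> \<epsilon> h * (norm (g (x + h) - g x))\<^sup>2 / \<epsilon>\<^sup>2) \<partial>lborel)"
          by (rule M.NL_inner[OF gm F(2) e2 MM])
        also have "\<dots> = (\<integral>\<^sup>+h. ennreal (1 / \<epsilon>\<^sup>2) * ennreal (M.\<rho> \<epsilon> h * (norm (g (x + h) - g x))\<^sup>2) \<partial>lborel)"
        proof (intro nn_integral_cong)
          fix h
          have "M.\<rho> \<epsilon> h * (norm (g (x + h) - g x))\<^sup>2 / \<epsilon>\<^sup>2 = 1 / \<epsilon>\<^sup>2 * (M.\<rho> \<epsilon> h * (norm (g (x + h) - g x))\<^sup>2)"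
            by simp
          then show "ennreal (M.\<rho> \<epsilon> h * (norm (g (x + h) - g x))\<^sup>2 / \<epsilon>\<^sup>2) = ennreal (1 / \<epsilon>\<^sup>2) * ennreal (M.\<rho> \<epsilon> h * (norm (g (x + h) - g x))\<^sup>2)"
            using ennreal_mult'[of "1 / \<epsilon>\<^sup>2" "M.\<rho> \<epsilon> h * (norm (g (x + h) - g x))\<^sup>2"] by simp
        qed
        also have "\<dots> = ennreal (1 / \<epsilon>\<^sup>2) * (\<integral>\<^sup>+h. ennreal (M.\<rho> \<epsilon> h * (norm (g (x + h) - g x))\<^sup>2) \<partial>lborel)"
          by (rule nn_integral_cmult) measurable
        finally show "(\<integral>\<^sup>+ y\<in>torus_cube. ennreal ((norm (g x - g y))\<^sup>2 / \<epsilon>\<^sup>2 * moll \<omega> \<epsilon> CARD('n) (tdist x y)) \<partial>lborel) * indicator torus_cube x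
            = ennreal (1 / \<epsilon>\<^sup>2) * ((\<integral>\<^sup>+h. ennreal (M.\<rho> \<epsilon> h * (norm (g (x + h) - g x))\<^sup>2) \<partial>lborel) * indicator torus_cube x)"
          by (simp add: mult.assoc)
      qed
      also have "\<dots> = ennreal (1 / \<epsilon>\<^sup>2) * (\<integral>\<^sup>+ x\<in>torus_cube. (\<integral>\<^sup>+h. ennreal (M.\<rho> \<epsilon> h * (norm (g (x + h) - g x))\<^sup>2) \<partial>lborel) \<partial>lborel)"
        by (rule nn_integral_cmult) measurable
      also have "\<dots> = ennreal (1 / \<epsilon>\<^sup>2) * N"
        unfolding N_def by (simp only: M.TJ[OF gm e(1)])
      finally show ?thesis .
    qed
    have gb: "(\<integral>\<^sup>+x\<in>torus_cube. ennreal ((norm (g x))\<^sup>2) \<partial>lborel)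
       \<le> 2 * (\<integral>\<^sup>+h. ennreal (M.\<rho> \<delta> h) * Dg g h \<partial>lborel)
         + 2 * (\<Sum>i\<in>UNIV. ennreal (M.A i / \<delta>) * (ennreal (M.A i / \<delta>) * ennreal l))"
      using M.gbound[OF H dd] unfolding Lf .
    have ss: "(\<integral>\<^sup>+h. ennreal (M.\<rho> \<delta> h) * Dg g h \<partial>lborel) \<le> ennreal ((real m)\<^sup>2) * N"
      unfolding \<delta>_def N_def by (rule M.scale_step[OF gm F(2) m1 e(1)])
    have c1: "2 * (ennreal ((real m)\<^sup>2) * N) \<le> ennreal \<gamma> * (ennreal (1 / \<epsilon>\<^sup>2) * N)"
    proof -
      have "\<delta>\<^sup>2 < (2 * \<delta>0)\<^sup>2" using dup dd by (intro power_strict_mono) auto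
      then have "2 * \<delta>\<^sup>2 \<le> \<gamma>" using d0g by (simp add: power_mult_distrib)
      then have "2 * (real m)\<^sup>2 * \<epsilon>\<^sup>2 \<le> \<gamma>" unfolding \<delta>_def by (simp add: power_mult_distrib)
      then have r: "2 * (real m)\<^sup>2 \<le> \<gamma> * (1 / \<epsilon>\<^sup>2)" using e by (simp add: field_simps)
      have "2 * (ennreal ((real m)\<^sup>2) * N) = ennreal (2 * (real m)\<^sup>2) * N"
        by (simp add: ennreal_mult mult.assoc)
      also have "\<dots> \<le> ennreal (\<gamma> * (1 / \<epsilon>\<^sup>2)) * N" using r by (intro mult_right_mono ennreal_leI) auto
      also have "\<dots> = ennreal \<gamma> * (ennreal (1 / \<epsilon>\<^sup>2) * N)"
      proof -
        have "ennreal (\<gamma> * (1 / \<epsilon>\<^sup>2)) = ennreal \<gamma> * ennreal (1 / \<epsilon>\<^sup>2)" using \<gamma> by (intro ennreal_mult) auto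
        then show ?thesis by (simp only: mult.assoc)
      qed
      finally show ?thesis .
    qed
    have c2: "ennreal l + 2 * (\<Sum>i\<in>UNIV. ennreal (M.A i / \<delta>) * (ennreal (M.A i / \<delta>) * ennreal l)) \<le> ennreal (C * l)"
    proof -
      have A0: "0 \<le> M.A i / \<delta>" for i using M.A_nonneg[of i] dd by simp
      have "(\<Sum>i\<in>UNIV. ennreal (M.A i / \<delta>) * (ennreal (M.A i / \<delta>) * ennreal l)) = ennreal (\<Sum>i\<in>UNIV. (M.A i / \<delta>)\<^sup>2 * l)"
      proof -
        have "ennreal (M.A i / \<delta>) * (ennreal (M.A i / \<delta>) * ennreal l) = ennreal ((M.A i / \<delta>)\<^sup>2 * l)" for i
        proof -
          define c where "c = M.A i / \<delta>"
          have c0: "0 \<le> c" unfolding c_def using A0[of i] .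
          have e1: "ennreal (c * l) = ennreal c * ennreal l" using c0 l0 by (rule ennreal_mult)
          have e2: "ennreal (c * (c * l)) = ennreal c * ennreal (c * l)" using c0 l0 by (intro ennreal_mult) auto
          have "ennreal c * (ennreal c * ennreal l) = ennreal (c * (c * l))" using e1 e2 by simp
          also have "c * (c * l) = c\<^sup>2 * l" by (simp add: power2_eq_square)
          finally show ?thesis unfolding c_def .
        qed
        then show ?thesis using A0 l0 by (simp add: sum_ennreal)
      qed
      note that_eq = this
      then have "ennreal l + 2 * (\<Sum>i\<in>UNIV. ennreal (M.A i / \<delta>) * (ennreal (M.A i / \<delta>) * ennreal l))
          = ennreal ((1 + 2 * (\<Sum>i\<in>UNIV. (M.A i / \<delta>)\<^sup>2)) * l)"
      proof -
        define S' where "S' = (\<Sum>i\<in>UNIV. (M.A i / \<delta>)\<^sup>2)"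
        have S0: "0 \<le> S'" unfolding S'_def by (simp add: sum_nonneg)
        have "(\<Sum>i\<in>UNIV. (M.A i / \<delta>)\<^sup>2 * l) = S' * l" unfolding S'_def by (simp add: sum_distrib_right)
        moreover have "ennreal (2 * (S' * l)) = 2 * ennreal (S' * l)"
          using ennreal_mult[of 2 "S' * l"] S0 l0 by simp
        moreover have "ennreal (l + 2 * (S' * l)) = ennreal l + ennreal (2 * (S' * l))"
          using S0 l0 by (intro ennreal_plus) auto
        moreover have "(1 + 2 * S') * l = l + 2 * (S' * l)" by (simp add: algebra_simps)
        ultimately show ?thesis using that_eq by (simp add: S'_def)
      qed
      also have "\<dots> \<le> ennreal (C * l)"
      proof (intro ennreal_leI mult_right_mono l0)
        have "(M.A i / \<delta>)\<^sup>2 \<le> (M.A i / \<delta>0)\<^sup>2" for i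
          using A0[of i] M.A_nonneg[of i] dlow d0 by (intro power_mono divide_left_mono) auto
        then show "1 + 2 * (\<Sum>i\<in>UNIV. (M.A i / \<delta>)\<^sup>2) \<le> C" unfolding C_def by (simp add: sum_mono)
      qed
      finally show ?thesis .
    qed
    have "ennreal (H1_sq f g) \<le> ennreal l + (2 * (ennreal ((real m)\<^sup>2) * N)
         + 2 * (\<Sum>i\<in>UNIV. ennreal (M.A i / \<delta>) * (ennreal (M.A i / \<delta>) * ennreal l)))"
      unfolding H1e using gb ss by (intro add_left_mono order_trans[OF gb] add_right_mono mult_left_mono) auto
    also have "\<dots> = 2 * (ennreal ((real m)\<^sup>2) * N) + (ennreal l + 2 * (\<Sum>i\<in>UNIV. ennreal (M.A i / \<delta>) * (ennreal (M.A i / \<delta>) * ennreal l)))"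
      by (simp add: ac_simps)
    also have "\<dots> \<le> ennreal \<gamma> * (ennreal (1 / \<epsilon>\<^sup>2) * N) + ennreal (C * l)"
      by (rule add_mono[OF c1 c2])
    finally show ?thesis unfolding NLI l_def .
  qed
  show ?thesis using d0 C0 main by blast
qed


end
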